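(* Let $m\le n$ and let $\theta(Z)=\|Z\|_2$ be the spectral norm on $\mathbb{R}^{m\times n}$. Let $P,W\in\mathbb{R}^{m\times n}$ with $P\neq0$ and $W\in\partial\theta(P)$, and let $Q=P+W$. Let $D,H\in\mathbb{R}^{m\times n}$. If $H=\mathrm{Prox}_\theta'(Q;H+D)$, then $H\in\mathcal C_\theta(P,W)$ and $\langle H,D\rangle=-\psi^*_{(P,H)}(W)$.
   Context: $\mathbb{R}^{m\times n}$ carries the inner product $\langle A,B\rangle=\mathrm{trace}(A^TB)$. $\mathrm{Prox}_\theta(Z)=\arg\min_{Z'}\{\theta(Z')+\frac12\|Z'-Z\|^2\}$ is the proximal mapping of $\theta$, and $\mathrm{Prox}_\theta'(Q;D)$ denotes its (existing) directional derivative at $Q$ in direction $D$. $\theta'(P;D)$ is the directional derivative of $\theta$; the critical cone is $\mathcal C_\theta(P,W)=\{D:\theta'(P;D)=\langle D,W\rangle\}$. Second-order directional derivative: $\theta''(P;D,Z)=\lim_{t\downarrow0}\frac{\theta(P+tD+\frac12t^2Z)-\theta(P)-t\theta'(P;D)}{\frac12t^2}$, and $\psi^*_{(P,D)}(W):=\sup_Z\{\langle W,Z\rangle-\theta''(P;D,Z)\}$. *)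

theory Defs
  imports "HOL-Analysis.Analysis"
begin

text \<open>Matrices in R^{m x n} are rendered as real^'n^'m (rows indexed by 'm).
  The vector inner product on this type is sum_{i,j} A_ij B_ij = trace(A^T B),
  and norm is the Frobenius norm.\<close>

definition spec_norm :: "real^'n^'m \<Rightarrow> real" where
  "spec_norm A = onorm (\<lambda>x. A *v x)"

definition subdiff :: "('a::real_inner \<Rightarrow> real) \<Rightarrow> 'a \<Rightarrow> 'a set" where
  "subdiff \<theta> P = {W. \<forall>Z. \<theta> Z \<ge> \<theta> P + W \<bullet> (Z - P)}"

definition prox :: "('a::real_inner \<Rightarrow> real) \<Rightarrow> 'a \<Rightarrow> 'a" where
  "prox \<theta> Z = (THE Z'. \<forall>Y. \<theta> Z' + (norm (Z' - Z))\<^sup>2 / 2 \<le> \<theta> Y + (norm (Y - Z))\<^sup>2 / 2)"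

definition has_dir_deriv :: "('a::real_normed_vector \<Rightarrow> 'b::real_normed_vector) \<Rightarrow> 'a \<Rightarrow> 'a \<Rightarrow> 'b \<Rightarrow> bool" where
  "has_dir_deriv f Q D V \<longleftrightarrow> ((\<lambda>t. (f (Q + t *\<^sub>R D) - f Q) /\<^sub>R t) \<longlongrightarrow> V) (at_right 0)"

definition dir_deriv :: "('a::real_normed_vector \<Rightarrow> real) \<Rightarrow> 'a \<Rightarrow> 'a \<Rightarrow> real" where
  "dir_deriv \<theta> P D = Lim (at_right 0) (\<lambda>t. (\<theta> (P + t *\<^sub>R D) - \<theta> P) / t)"

definition crit_cone :: "('a::real_inner \<Rightarrow> real) \<Rightarrow> 'a \<Rightarrow> 'a \<Rightarrow> 'a set" where
  "crit_cone \<theta> P W = {D. dir_deriv \<theta> P D = D \<bullet> W}"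

definition second_dir_deriv :: "('a::real_normed_vector \<Rightarrow> real) \<Rightarrow> 'a \<Rightarrow> 'a \<Rightarrow> 'a \<Rightarrow> real" where
  "second_dir_deriv \<theta> P D Z = Lim (at_right 0)
     (\<lambda>t. (\<theta> (P + t *\<^sub>R D + (t\<^sup>2 / 2) *\<^sub>R Z) - \<theta> P - t * dir_deriv \<theta> P D) / (t\<^sup>2 / 2))"

definition psi_star :: "('a::real_inner \<Rightarrow> real) \<Rightarrow> 'a \<Rightarrow> 'a \<Rightarrow> 'a \<Rightarrow> ereal" where
  "psi_star \<theta> P D W = (SUP Z. ereal (W \<bullet> Z - second_dir_deriv \<theta> P D Z))"

end

theory Submission
  imports Defs
begin

lemma mv_scaleR: "(c *\<^sub>R (A::real^'n^'m)) *v x = c *\<^sub>R (A *v x)"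
  by (simp add: vec_eq_iff matrix_vector_mult_def sum_distrib_left mult.assoc vector_scaleR_component)

lemma mv_uminus: "(- (A::real^'n^'m)) *v x = - (A *v x)"
  using mv_scaleR[of "-1" A x] by simp

lemma mv_add_r: "(A::real^'n^'m) *v (x + y) = A *v x + A *v y"
  by (rule linear_add[OF matrix_vector_mul_linear])

lemma mv_scale_r: "(A::real^'n^'m) *v (c *\<^sub>R x) = c *\<^sub>R (A *v x)"
  by (rule linear_cmul[OF matrix_vector_mul_linear])

lemma mv_diff_r: "(A::real^'n^'m) *v (x - y) = A *v x - A *v y"
  by (rule linear_diff[OF matrix_vector_mul_linear])

lemma mv_zero_r: "(A::real^'n^'m) *v 0 = (0::real^'m)"
  by (simp add: vec_eq_iff matrix_vector_mult_def)

lemmas mv_simps = matrix_vector_mult_add_rdistrib matrix_vector_mult_diff_rdistrib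
  mv_scaleR mv_uminus mv_add_r mv_scale_r mv_diff_r mv_zero_r matrix_vector_mult_0

lemma sn_bound: "norm (A *v x) \<le> spec_norm A * norm x"
  unfolding spec_norm_def by (rule onorm[OF matrix_vector_mul_bounded_linear])

lemma sn_nonneg: "0 \<le> spec_norm A"
  unfolding spec_norm_def by (rule onorm_pos_le[OF matrix_vector_mul_bounded_linear])

lemma sn_triangle: "spec_norm (A + B) \<le> spec_norm A + spec_norm B"
  unfolding spec_norm_def matrix_vector_mult_add_rdistrib
  by (rule onorm_triangle[OF matrix_vector_mul_bounded_linear matrix_vector_mul_bounded_linear])

lemma sn_scale: "spec_norm (c *\<^sub>R A) = \<bar>c\<bar> * spec_norm A"
  unfolding spec_norm_def mv_scaleR
  by (rule onorm_scaleR[OF matrix_vector_mul_bounded_linear])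

lemma sn_uminus: "spec_norm (- A) = spec_norm A"
  using sn_scale[of "-1" A] by simp

lemma sn_le_norm: "spec_norm (A::real^'n^'m) \<le> real CARD('m) * real CARD('n) * norm A"
proof -
  have "\<bar>A $ i $ j\<bar> \<le> norm A" for i j
  proof -
    have "\<bar>A $ i $ j\<bar> \<le> norm (A $ i)" by (rule component_le_norm_cart)
    also have "\<dots> \<le> norm A" by (rule Finite_Cartesian_Product.norm_nth_le)
    finally show ?thesis .
  qed
  then show ?thesis unfolding spec_norm_def by (rule onorm_le_matrix_component)
qed

definition LC :: "'n itself \<Rightarrow> 'm itself \<Rightarrow> real" where
  "LC _ _ = real CARD('m) * real CARD('n)"

lemma sn_diff_le: "\<bar>spec_norm A - spec_norm B\<bar> \<le> spec_norm (A - B)"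
proof -
  have "spec_norm A \<le> spec_norm B + spec_norm (A - B)"
    using sn_triangle[of B "A - B"] by simp
  moreover have "spec_norm B \<le> spec_norm A + spec_norm (A - B)"
    using sn_triangle[of A "B - A"] sn_uminus[of "A - B"] by simp
  ultimately show ?thesis by linarith
qed

lemma sn_lipschitz: "\<bar>spec_norm (A::real^'n^'m) - spec_norm B\<bar> \<le> real CARD('m) * real CARD('n) * norm (A - B)"
  using sn_diff_le[of A B] sn_le_norm[of "A - B"] by linarith

lemma sn_continuous: "continuous_on S (spec_norm :: real^'n^'m \<Rightarrow> real)"
proof (rule lipschitz_on_continuous_on)
  show "(real CARD('m) * real CARD('n))-lipschitz_on S spec_norm"
    unfolding lipschitz_on_def using sn_lipschitz by (auto simp: dist_norm)
qed

lemma sn_attained: "\<exists>x::real^'n. norm x = 1 \<and> norm (A *v x) = spec_norm A"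
proof -
  obtain e :: "real^'n" where e: "norm e = 1"
    using vector_choose_size[of 1] by auto
  have "continuous_on (sphere 0 1) (\<lambda>x::real^'n. norm (A *v x))"
    by (intro continuous_intros linear_continuous_on matrix_vector_mul_bounded_linear)
  then obtain x0 where x0: "x0 \<in> sphere (0::real^'n) 1"
    and mx: "\<forall>y\<in>sphere 0 1. norm (A *v y) \<le> norm (A *v x0)"
    using continuous_attains_sup[OF compact_sphere, of 0 1] e by fastforce
  have "spec_norm A \<le> norm (A *v x0)"
    unfolding spec_norm_def
  proof (rule onorm_le)
    fix x :: "real^'n"
    show "norm (A *v x) \<le> norm (A *v x0) * norm x"
    proof (cases "x = 0")
      case True then show ?thesis by (simp add: mv_zero_r)
    next
      case False
      have "norm (A *v ((1 / norm x) *\<^sub>R x)) \<le> norm (A *v x0)"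
        using mx False by auto
      then have "norm (A *v x) / norm x \<le> norm (A *v x0)"
        by (simp add: mv_scale_r)
      then show ?thesis using False by (simp add: divide_le_eq mult.commute)
    qed
  qed
  moreover have "norm (A *v x0) \<le> spec_norm A"
    using sn_bound[of A x0] x0 by simp
  ultimately show ?thesis using x0 by (intro exI[of _ x0]) auto
qed

lemma sn_convex: "convex_on UNIV spec_norm"
proof (rule convex_onI)
  fix x y :: "real^'n^'m" and t :: real
  assume t: "0 < t" "t < 1"
  have "spec_norm ((1 - t) *\<^sub>R x + t *\<^sub>R y) \<le> spec_norm ((1 - t) *\<^sub>R x) + spec_norm (t *\<^sub>R y)"
    by (rule sn_triangle)
  also have "\<dots> = (1 - t) * spec_norm x + t * spec_norm y"
    using t by (simp add: sn_scale)
  finally show "spec_norm ((1 - t) *\<^sub>R x + t *\<^sub>R y) \<le> (1 - t) * spec_norm x + t * spec_norm y" .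
qed (rule convex_UNIV)

lemma norm_add_sq: "(norm (a + b :: 'a::real_inner))\<^sup>2 = (norm a)\<^sup>2 + 2 * (a \<bullet> b) + (norm b)\<^sup>2"
  by (simp add: power2_norm_eq_inner inner_add_left inner_add_right inner_commute)

lemma norm_diff_sq: "(norm (a - b :: 'a::real_inner))\<^sup>2 = (norm a)\<^sup>2 - 2 * (a \<bullet> b) + (norm b)\<^sup>2"
  by (simp add: power2_norm_eq_inner inner_diff_left inner_diff_right inner_commute)

lemma sn_zero: "spec_norm (0::real^'n^'m) = 0"
  using sn_scale[of 0 "0::real^'n^'m"] by simp

lemma sn_convex_comb:
  assumes "0 \<le> s" "s \<le> 1"
  shows "spec_norm ((1 - s) *\<^sub>R G + s *\<^sub>R (Y::real^'n^'m)) \<le> (1 - s) * spec_norm G + s * spec_norm Y"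
proof -
  have "spec_norm ((1 - s) *\<^sub>R G + s *\<^sub>R Y) \<le> spec_norm ((1 - s) *\<^sub>R G) + spec_norm (s *\<^sub>R Y)"
    by (rule sn_triangle)
  also have "\<dots> = (1 - s) * spec_norm G + s * spec_norm Y"
    using assms by (simp add: sn_scale)
  finally show ?thesis .
qed

lemma subdiff_props:
  assumes "W \<in> subdiff spec_norm (P::real^'n^'m)"
  shows "W \<bullet> P = spec_norm P" "\<And>X. W \<bullet> X \<le> spec_norm X"
proof -
  have s: "\<And>Z. spec_norm Z \<ge> spec_norm P + W \<bullet> (Z - P)"
    using assms unfolding subdiff_def by auto
  have "0 \<ge> spec_norm P - W \<bullet> P" using s[of 0] by (simp add: sn_zero)
  moreover have "2 * spec_norm P \<ge> spec_norm P + W \<bullet> P"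
    using s[of "2 *\<^sub>R P"] by (simp add: sn_scale inner_diff_right)
  ultimately show e: "W \<bullet> P = spec_norm P" by linarith
  fix X show "W \<bullet> X \<le> spec_norm X" using s[of X] e by (simp add: inner_diff_right)
qed

lemma min_imp_subdiff:
  fixes G Z :: "real^'n^'m"
  assumes m: "\<And>Y. spec_norm G + (norm (G - Z))\<^sup>2 / 2 \<le> spec_norm Y + (norm (Y - Z))\<^sup>2 / 2"
  shows "Z - G \<in> subdiff spec_norm G"
  unfolding subdiff_def
proof (clarify)
  fix Y :: "real^'n^'m"
  define d where "d = Y - G"
  define c where "c = spec_norm Y + (G - Z) \<bullet> d - spec_norm G"
  have key: "c + s * (norm d)\<^sup>2 / 2 \<ge> 0" if s: "0 < s" "s \<le> 1" for s
  proof -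
    have X: "G + s *\<^sub>R d = (1 - s) *\<^sub>R G + s *\<^sub>R Y"
      by (simp add: d_def algebra_simps)
    have cv: "spec_norm (G + s *\<^sub>R d) \<le> (1 - s) * spec_norm G + s * spec_norm Y"
      unfolding X using s by (intro sn_convex_comb) auto
    have nq: "(norm (G + s *\<^sub>R d - Z))\<^sup>2 = (norm (G - Z))\<^sup>2 + 2 * s * ((G - Z) \<bullet> d) + s\<^sup>2 * (norm d)\<^sup>2"
    proof -
      have "G + s *\<^sub>R d - Z = (G - Z) + s *\<^sub>R d" by simp
      then show ?thesis by (simp only: norm_add_sq) (simp add: power_mult_distrib power2_abs)
    qed
    have mm: "spec_norm G + (norm (G - Z))\<^sup>2 / 2 \<le> spec_norm (G + s *\<^sub>R d) + (norm (G + s *\<^sub>R d - Z))\<^sup>2 / 2"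
      by (rule m)
    have cv': "spec_norm (G + s *\<^sub>R d) \<le> spec_norm G - s * spec_norm G + s * spec_norm Y"
      using cv by (simp add: algebra_simps)
    have nq': "(norm (G + s *\<^sub>R d - Z))\<^sup>2 = (norm (G - Z))\<^sup>2 + 2 * (s * ((G - Z) \<bullet> d)) + s\<^sup>2 * (norm d)\<^sup>2"
      using nq by simp
    have "s * spec_norm G \<le> s * spec_norm Y + s * ((G - Z) \<bullet> d) + s\<^sup>2 * (norm d)\<^sup>2 / 2"
      using mm cv' nq' by linarith
    then have "s * (c + s * (norm d)\<^sup>2 / 2) \<ge> 0"
      unfolding c_def by (simp add: algebra_simps power2_eq_square)
    then show ?thesis using s by (simp add: zero_le_mult_iff)
  qed
  have "c \<ge> 0"
  proof (rule ccontr)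
    assume "\<not> c \<ge> 0"
    then have cn: "c < 0" by simp
    define s where "s = min 1 (- c / ((norm d)\<^sup>2 + 1))"
    have "0 < (norm d)\<^sup>2 + 1" by (simp add: add_nonneg_pos)
    then have s0: "0 < s" using cn by (simp add: s_def divide_neg_pos)
    have s1: "s \<le> 1" by (simp add: s_def)
    have "s * (norm d)\<^sup>2 \<le> (- c / ((norm d)\<^sup>2 + 1)) * (norm d)\<^sup>2"
      by (intro mult_right_mono) (auto simp: s_def)
    also have "\<dots> < - c"
    proof -
      have "(- c / ((norm d)\<^sup>2 + 1)) * (norm d)\<^sup>2 = - c * ((norm d)\<^sup>2 / ((norm d)\<^sup>2 + 1))" by simp
      also have "\<dots> < - c * 1"
        using cn by (intro mult_strict_left_mono) (auto simp: divide_less_eq add_nonneg_pos)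
      finally show ?thesis by simp
    qed
    finally have "s * (norm d)\<^sup>2 < - c" .
    then have "c + s * (norm d)\<^sup>2 / 2 < 0" using cn by linarith
    with key[OF s0 s1] show False by linarith
  qed
  then show "spec_norm G + (Z - G) \<bullet> (Y - G) \<le> spec_norm Y"
    unfolding c_def d_def by (simp add: inner_diff_left inner_diff_right)
qed

lemma subdiff_strong:
  fixes G Z Y :: "real^'n^'m"
  assumes "Z - G \<in> subdiff spec_norm G"
  shows "spec_norm G + (norm (G - Z))\<^sup>2 / 2 + (norm (Y - G))\<^sup>2 / 2 \<le> spec_norm Y + (norm (Y - Z))\<^sup>2 / 2"
proof -
  have s: "spec_norm Y \<ge> spec_norm G + (Z - G) \<bullet> (Y - G)"
    using assms unfolding subdiff_def by auto
  have "Y - Z = (Y - G) + (G - Z)" by simp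
  then have "(norm (Y - Z))\<^sup>2 = (norm (Y - G))\<^sup>2 + 2 * ((Y - G) \<bullet> (G - Z)) + (norm (G - Z))\<^sup>2"
    by (metis norm_add_sq)
  moreover have "(Z - G) \<bullet> (Y - G) = - ((Y - G) \<bullet> (G - Z))"
    by (simp add: inner_commute inner_diff_left inner_diff_right)
  ultimately show ?thesis using s by linarith
qed

lemma prox_eq:
  fixes G Z :: "real^'n^'m"
  assumes "Z - G \<in> subdiff spec_norm G"
  shows "prox spec_norm Z = G"
  unfolding prox_def
proof (rule the_equality)
  show "\<forall>Y. spec_norm G + (norm (G - Z))\<^sup>2 / 2 \<le> spec_norm Y + (norm (Y - Z))\<^sup>2 / 2"
  proof
    fix Y
    have "spec_norm G + (norm (G - Z))\<^sup>2 / 2 + (norm (Y - G))\<^sup>2 / 2 \<le> spec_norm Y + (norm (Y - Z))\<^sup>2 / 2"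
      by (rule subdiff_strong[OF assms])
    moreover have "0 \<le> (norm (Y - G))\<^sup>2" by simp
    ultimately show "spec_norm G + (norm (G - Z))\<^sup>2 / 2 \<le> spec_norm Y + (norm (Y - Z))\<^sup>2 / 2" by linarith
  qed
next
  fix G' assume a: "\<forall>Y. spec_norm G' + (norm (G' - Z))\<^sup>2 / 2 \<le> spec_norm Y + (norm (Y - Z))\<^sup>2 / 2"
  have "spec_norm G + (norm (G - Z))\<^sup>2 / 2 + (norm (G' - G))\<^sup>2 / 2 \<le> spec_norm G' + (norm (G' - Z))\<^sup>2 / 2"
    by (rule subdiff_strong[OF assms])
  moreover have "spec_norm G' + (norm (G' - Z))\<^sup>2 / 2 \<le> spec_norm G + (norm (G - Z))\<^sup>2 / 2"
    using a by blast
  ultimately have "(norm (G' - G))\<^sup>2 \<le> 0" by linarith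
  then show "G' = G" by simp
qed

lemma prox_exists:
  fixes Z :: "real^'n^'m"
  shows "\<exists>G. \<forall>Y. spec_norm G + (norm (G - Z))\<^sup>2 / 2 \<le> spec_norm Y + (norm (Y - Z))\<^sup>2 / 2"
proof -
  define F where "F = (\<lambda>X::real^'n^'m. spec_norm X + (norm (X - Z))\<^sup>2 / 2)"
  define r where "r = spec_norm Z + 1"
  have r0: "0 \<le> r" using sn_nonneg[of Z] by (simp add: r_def)
  have cF: "continuous_on (cball Z r) F"
    unfolding F_def by (intro continuous_intros sn_continuous) auto
  obtain G where G: "G \<in> cball Z r" and Gm: "\<forall>y\<in>cball Z r. F G \<le> F y"
    using continuous_attains_inf[OF compact_cball _ cF] r0 by (metis centre_in_cball empty_iff)
  have "F G \<le> F Y" for Y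
  proof (cases "Y \<in> cball Z r")
    case True then show ?thesis using Gm by auto
  next
    case False
    then have "norm (Y - Z) > r" by (simp add: dist_norm norm_minus_commute)
    then have "(norm (Y - Z))\<^sup>2 > r\<^sup>2" using r0 by (simp add: power_strict_mono)
    moreover have "r\<^sup>2 \<ge> 2 * spec_norm Z + 1"
      using sn_nonneg[of Z] by (simp add: r_def power2_eq_square algebra_simps)
    ultimately have "F Y > spec_norm Z" unfolding F_def using sn_nonneg[of Y] by linarith
    moreover have "F Z = spec_norm Z" by (simp add: F_def)
    moreover have "F G \<le> F Z" using Gm r0 by simp
    ultimately show ?thesis by linarith
  qed
  then show ?thesis unfolding F_def by blast
qed

lemma prox_subdiff:
  fixes Z :: "real^'n^'m"
  shows "Z - prox spec_norm Z \<in> subdiff spec_norm (prox spec_norm Z)"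
proof -
  obtain G where G: "\<forall>Y. spec_norm G + (norm (G - Z))\<^sup>2 / 2 \<le> spec_norm Y + (norm (Y - Z))\<^sup>2 / 2"
    using prox_exists by blast
  then have s: "Z - G \<in> subdiff spec_norm G" by (intro min_imp_subdiff) auto
  then show ?thesis using prox_eq[OF s] by simp
qed

lemma norm_add_scale_sq: "(norm (u + s *\<^sub>R v :: 'a::real_inner))\<^sup>2 = (norm u)\<^sup>2 + 2 * s * (u \<bullet> v) + s\<^sup>2 * (norm v)\<^sup>2"
  by (simp add: norm_add_sq power_mult_distrib power2_abs)

locale pP =
  fixes P :: "real^'n^'m"
  assumes Pnz: "P \<noteq> 0"
begin

definition "sig = spec_norm P"
definition "E0 = {x. \<forall>y. (P *v x) \<bullet> (P *v y) = sig\<^sup>2 * (x \<bullet> y)}"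
definition "Perp = {b. \<forall>a\<in>E0. a \<bullet> b = 0}"

lemma sig_pos: "0 < sig"
proof -
  obtain i j where "P $ i $ j \<noteq> 0" using Pnz by (auto simp: vec_eq_iff)
  moreover have "\<bar>P $ i $ j\<bar> \<le> sig" unfolding sig_def spec_norm_def by (rule matrix_component_le_onorm)
  ultimately show ?thesis by linarith
qed

lemma normP_le: "norm (P *v x) \<le> sig * norm x"
  unfolding sig_def by (rule sn_bound)

lemma normP_sq_le: "(norm (P *v x))\<^sup>2 \<le> sig\<^sup>2 * (norm x)\<^sup>2"
proof -
  have "(norm (P *v x))\<^sup>2 \<le> (sig * norm x)\<^sup>2"
    using normP_le[of x] by (intro power_mono) auto
  then show ?thesis by (simp add: power_mult_distrib)
qed

lemma E0_iff: "x \<in> E0 \<longleftrightarrow> norm (P *v x) = sig * norm x"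
proof
  assume "x \<in> E0"
  then have "(P *v x) \<bullet> (P *v x) = sig\<^sup>2 * (x \<bullet> x)" unfolding E0_def by auto
  then have "(norm (P *v x))\<^sup>2 = (sig * norm x)\<^sup>2"
    by (simp add: power2_norm_eq_inner power_mult_distrib)
  then show "norm (P *v x) = sig * norm x"
    using sig_pos by (simp add: power2_eq_iff_nonneg)
next
  assume ex: "norm (P *v x) = sig * norm x"
  show "x \<in> E0" unfolding E0_def
  proof (clarify)
    fix y
    define a where "a = (P *v x) \<bullet> (P *v y) - sig\<^sup>2 * (x \<bullet> y)"
    define b where "b = (norm (P *v y))\<^sup>2 - sig\<^sup>2 * (norm y)\<^sup>2"
    have b0: "b \<le> 0" using normP_sq_le[of y] by (simp add: b_def)
    have quad: "2 * s * a + s\<^sup>2 * b \<le> 0" for s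
    proof -
      have "(norm (P *v (x + s *\<^sub>R y)))\<^sup>2 \<le> sig\<^sup>2 * (norm (x + s *\<^sub>R y))\<^sup>2" by (rule normP_sq_le)
      moreover have "(norm (P *v (x + s *\<^sub>R y)))\<^sup>2 = (norm (P *v x))\<^sup>2 + 2 * s * ((P *v x) \<bullet> (P *v y)) + s\<^sup>2 * (norm (P *v y))\<^sup>2"
        by (simp add: mv_simps norm_add_scale_sq)
      moreover have "(norm (x + s *\<^sub>R y))\<^sup>2 = (norm x)\<^sup>2 + 2 * s * (x \<bullet> y) + s\<^sup>2 * (norm y)\<^sup>2"
        by (simp add: norm_add_scale_sq)
      moreover have "(norm (P *v x))\<^sup>2 = sig\<^sup>2 * (norm x)\<^sup>2" using ex by (simp add: power_mult_distrib)
      ultimately show ?thesis unfolding a_def b_def by (simp add: algebra_simps)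
    qed
    define k where "k = 1 - b"
    have k0: "k \<ge> 1" using b0 by (simp add: k_def)
    define s where "s = a / k"
    have "(2 * s * a + s\<^sup>2 * b) * k\<^sup>2 = a\<^sup>2 * (2 * k + b)"
      using k0 unfolding s_def by (simp add: field_simps power2_eq_square)
    also have "2 * k + b = 2 - b" by (simp add: k_def)
    finally have "(2 * s * a + s\<^sup>2 * b) * k\<^sup>2 = a\<^sup>2 * (2 - b)" .
    moreover have "(2 * s * a + s\<^sup>2 * b) * k\<^sup>2 \<le> 0"
      using quad[of s] by (simp add: mult_nonpos_nonneg)
    ultimately have "a\<^sup>2 * (2 - b) \<le> 0" by simp
    moreover have "2 - b > 0" using b0 by simp
    ultimately have "a\<^sup>2 \<le> 0" by (simp add: mult_le_0_iff)
    then have "a = 0" by simp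
    then show "(P *v x) \<bullet> (P *v y) = sig\<^sup>2 * (x \<bullet> y)" by (simp add: a_def)
  qed
qed

lemma E0_sub: "subspace E0"
  unfolding subspace_def E0_def
  by (auto simp: mv_simps inner_add_left inner_add_right algebra_simps)

lemma Perp_sub: "subspace Perp"
  unfolding subspace_def Perp_def
  by (auto simp: inner_add_left inner_add_right)

lemma E0_closed: "closed E0"
proof -
  have "E0 = {x. norm (P *v x) = sig * norm x}" using E0_iff by auto
  also have "closed \<dots>"
    by (intro closed_Collect_eq continuous_intros linear_continuous_on matrix_vector_mul_bounded_linear)
  finally show ?thesis .
qed

lemma Perp_closed: "closed Perp"
proof -
  have "Perp = (\<Inter>a\<in>E0. {b. a \<bullet> b = 0})" unfolding Perp_def by auto
  also have "closed \<dots>" by (intro closed_INT ballI closed_hyperplane)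
  finally show ?thesis .
qed

lemma EP_orth:
  assumes "a \<in> E0" "b \<in> Perp"
  shows "a \<bullet> b = 0" "(P *v a) \<bullet> (P *v b) = 0" "(P *v b) \<bullet> (P *v a) = 0"
proof -
  show ab: "a \<bullet> b = 0" using assms unfolding Perp_def by auto
  show "(P *v a) \<bullet> (P *v b) = 0" using assms(1) ab unfolding E0_def by auto
  then show "(P *v b) \<bullet> (P *v a) = 0" by (simp add: inner_commute)
qed

lemma decomp: obtains a b where "a \<in> E0" "b \<in> Perp" "x = a + b"
proof -
  obtain y z where y: "y \<in> span E0" and z: "\<And>w. w \<in> span E0 \<Longrightarrow> orthogonal z w" and xyz: "x = y + z"
    using orthogonal_subspace_decomp_exists[of E0 x] by blast
  have sp: "span E0 = E0" using E0_sub by (simp add: span_eq_iff)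
  have "z \<in> Perp" using z unfolding Perp_def sp orthogonal_def by (auto simp: inner_commute)
  then show ?thesis using that y xyz sp by auto
qed

lemma E0_normP: "a \<in> E0 \<Longrightarrow> (norm (P *v a))\<^sup>2 = sig\<^sup>2 * (norm a)\<^sup>2"
  using E0_iff by (simp add: power_mult_distrib)

lemma gap: obtains gam where "gam > 0" "\<And>b. b \<in> Perp \<Longrightarrow> (norm (P *v b))\<^sup>2 \<le> (sig\<^sup>2 - gam) * (norm b)\<^sup>2"
proof -
  define K where "K = Perp \<inter> sphere 0 1"
  have "K = sphere 0 1 \<inter> Perp" unfolding K_def by auto
  then have cK: "compact K" using compact_Int_closed[OF compact_sphere Perp_closed] by simp
  have scale: "(norm (P *v b))\<^sup>2 \<le> M * (norm b)\<^sup>2"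
    if M: "\<And>u. u \<in> K \<Longrightarrow> (norm (P *v u))\<^sup>2 \<le> M" and b: "b \<in> Perp" for b M
  proof (cases "b = 0")
    case True then show ?thesis by (simp add: mv_zero_r)
  next
    case False
    define u where "u = (1 / norm b) *\<^sub>R b"
    have "u \<in> K" using False b Perp_sub unfolding K_def u_def
      by (auto simp: subspace_def)
    then have "(norm (P *v u))\<^sup>2 \<le> M" by (rule M)
    moreover have "(norm (P *v b))\<^sup>2 = (norm b)\<^sup>2 * (norm (P *v u))\<^sup>2"
      using False by (simp add: u_def mv_simps power_mult_distrib power2_eq_square field_simps)
    ultimately show ?thesis
      by (metis mult.commute mult_right_mono zero_le_power2)
  qed
  show ?thesis
  proof (cases "K = {}")
    case True
    have "(norm (P *v b))\<^sup>2 \<le> (sig\<^sup>2 - sig\<^sup>2) * (norm b)\<^sup>2" if "b \<in> Perp" for b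
      by (rule scale) (use True that in auto)
    then show ?thesis using that[of "sig\<^sup>2"] sig_pos by auto
  next
    case False
    have "continuous_on K (\<lambda>u. (norm (P *v u))\<^sup>2)"
      by (intro continuous_intros linear_continuous_on matrix_vector_mul_bounded_linear)
    then obtain u0 where u0: "u0 \<in> K" and mx: "\<And>u. u \<in> K \<Longrightarrow> (norm (P *v u))\<^sup>2 \<le> (norm (P *v u0))\<^sup>2"
      using continuous_attains_sup[OF cK False] by blast
    have u0n: "norm u0 = 1" "u0 \<in> Perp" using u0 by (auto simp: K_def)
    have lt: "(norm (P *v u0))\<^sup>2 < sig\<^sup>2"
    proof -
      have le: "(norm (P *v u0))\<^sup>2 \<le> sig\<^sup>2" using normP_sq_le[of u0] u0n by simp
      have "(norm (P *v u0))\<^sup>2 \<noteq> sig\<^sup>2"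
      proof
        assume "(norm (P *v u0))\<^sup>2 = sig\<^sup>2"
        then have "norm (P *v u0) = sig * norm u0" using sig_pos u0n by (simp add: power2_eq_iff_nonneg)
        then have "u0 \<in> E0" using E0_iff by simp
        then have "u0 \<bullet> u0 = 0" using u0n EP_orth(1) by blast
        then show False using u0n by simp
      qed
      with le show ?thesis by simp
    qed
    show ?thesis
      by (rule that[of "sig\<^sup>2 - (norm (P *v u0))\<^sup>2"]) (use lt scale[OF mx] in auto)
  qed
qed

lemma E0_unit: obtains a where "a \<in> E0" "norm a = 1"
proof -
  obtain x where "norm x = 1" "norm (P *v x) = spec_norm P" using sn_attained by blast
  then show ?thesis using that[of x] E0_iff by (simp add: sig_def)
qed

end

lemma poly4: fixes v0 :: "'a::real_inner" shows "(norm (v0 + t *\<^sub>R v1 + t\<^sup>2 *\<^sub>R v2 + t^3 *\<^sub>R v3))\<^sup>2 = (norm v0)\<^sup>2 + 2*t*(v0 \<bullet> v1) + t\<^sup>2*((norm v1)\<^sup>2 + 2*(v0 \<bullet> v2)) + t^3 * (2*(v0 \<bullet> v3) + 2*(v1 \<bullet> v2) + t*((norm v2)\<^sup>2 + 2*(v1 \<bullet> v3)) + t\<^sup>2*(2*(v2 \<bullet> v3)) + t^3*(norm v3)\<^sup>2)"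
  apply (simp only: power2_norm_eq_inner inner_add_left inner_add_right inner_scaleR_left inner_scaleR_right)
  apply (simp add: inner_commute[of v1 v0] inner_commute[of v2 v0] inner_commute[of v3 v0] inner_commute[of v2 v1] inner_commute[of v3 v1] inner_commute[of v3 v2] algebra_simps power2_eq_square power3_eq_cube)
  done

definition rem4 :: "'a::real_inner \<Rightarrow> 'a \<Rightarrow> 'a \<Rightarrow> 'a \<Rightarrow> real \<Rightarrow> real" where
  "rem4 v0 v1 v2 v3 t = 2*(v0 \<bullet> v3) + 2*(v1 \<bullet> v2) + t*((norm v2)\<^sup>2 + 2*(v1 \<bullet> v3)) + t\<^sup>2*(2*(v2 \<bullet> v3)) + t^3*(norm v3)\<^sup>2"

lemma poly4': "(norm (v0 + t *\<^sub>R v1 + t\<^sup>2 *\<^sub>R v2 + t^3 *\<^sub>R v3))\<^sup>2 = (norm v0)\<^sup>2 + 2*t*(v0 \<bullet> v1) + t\<^sup>2*((norm v1)\<^sup>2 + 2*(v0 \<bullet> v2)) + t^3 * rem4 v0 v1 v2 v3 t"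
  unfolding rem4_def by (rule poly4)

lemma inner_le_sq: "norm u \<le> B \<Longrightarrow> norm v \<le> B \<Longrightarrow> \<bar>u \<bullet> v\<bar> \<le> B\<^sup>2"
proof -
  assume a: "norm u \<le> B" "norm v \<le> B"
  have B0: "0 \<le> B" using a norm_ge_zero[of u] by linarith
  have "\<bar>u \<bullet> v\<bar> \<le> norm u * norm v" by (rule Cauchy_Schwarz_ineq2)
  also have "\<dots> \<le> B * B" using a B0 by (intro mult_mono) auto
  finally show ?thesis by (simp add: power2_eq_square)
qed

lemma abs_t_le: "\<bar>t\<bar> \<le> 1 \<Longrightarrow> \<bar>t * x\<bar> \<le> \<bar>x::real\<bar>"
proof -
  assume "\<bar>t\<bar> \<le> 1"
  then have "\<bar>t\<bar> * \<bar>x\<bar> \<le> 1 * \<bar>x\<bar>" by (rule mult_right_mono) auto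
  then show ?thesis by (simp add: abs_mult)
qed

lemma abs5: "\<bar>(a::real) + b + c + d + e\<bar> \<le> \<bar>a\<bar> + \<bar>b\<bar> + \<bar>c\<bar> + \<bar>d\<bar> + \<bar>e\<bar>"
proof -
  have "\<bar>a + b + c + d + e\<bar> \<le> \<bar>a + b + c + d\<bar> + \<bar>e\<bar>" by (rule abs_triangle_ineq)
  moreover have "\<bar>a + b + c + d\<bar> \<le> \<bar>a + b + c\<bar> + \<bar>d\<bar>" by (rule abs_triangle_ineq)
  moreover have "\<bar>a + b + c\<bar> \<le> \<bar>a + b\<bar> + \<bar>c\<bar>" by (rule abs_triangle_ineq)
  moreover have "\<bar>a + b\<bar> \<le> \<bar>a\<bar> + \<bar>b\<bar>" by (rule abs_triangle_ineq)
  ultimately show ?thesis by linarith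
qed

lemma rem4_bound:
  assumes "norm v0 \<le> B" "norm v1 \<le> B" "norm v2 \<le> B" "norm v3 \<le> B" "\<bar>t\<bar> \<le> 1"
  shows "\<bar>rem4 v0 v1 v2 v3 t\<bar> \<le> 10 * B\<^sup>2"
proof -
  have B: "0 \<le> B" using assms(1) norm_ge_zero order_trans by blast
  have i03: "\<bar>v0 \<bullet> v3\<bar> \<le> B\<^sup>2" and i12: "\<bar>v1 \<bullet> v2\<bar> \<le> B\<^sup>2" and i13: "\<bar>v1 \<bullet> v3\<bar> \<le> B\<^sup>2"
    and i23: "\<bar>v2 \<bullet> v3\<bar> \<le> B\<^sup>2" using assms by (auto intro: inner_le_sq)
  have n2: "(norm v2)\<^sup>2 \<le> B\<^sup>2" and n3: "(norm v3)\<^sup>2 \<le> B\<^sup>2"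
    using assms by (auto intro: power_mono)
  have t2: "\<bar>t\<^sup>2\<bar> \<le> 1" using power_le_one[of "\<bar>t\<bar>" 2] assms(5) by (simp add: power_abs)
  have t3: "\<bar>t^3\<bar> \<le> 1" using power_le_one[of "\<bar>t\<bar>" 3] assms(5) by (simp add: power_abs)
  have h3: "\<bar>t*((norm v2)\<^sup>2 + 2*(v1 \<bullet> v3))\<bar> \<le> 3 * B\<^sup>2"
  proof -
    have "\<bar>t*((norm v2)\<^sup>2 + 2*(v1 \<bullet> v3))\<bar> \<le> \<bar>(norm v2)\<^sup>2 + 2*(v1 \<bullet> v3)\<bar>" by (rule abs_t_le[OF assms(5)])
    also have "\<dots> \<le> \<bar>(norm v2)\<^sup>2\<bar> + \<bar>2*(v1 \<bullet> v3)\<bar>" by (rule abs_triangle_ineq)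
    also have "\<dots> \<le> 3 * B\<^sup>2" using n2 i13 by simp
    finally show ?thesis .
  qed
  have h4: "\<bar>t\<^sup>2*(2*(v2 \<bullet> v3))\<bar> \<le> 2 * B\<^sup>2"
    using abs_t_le[OF t2, of "2*(v2 \<bullet> v3)"] i23 by simp
  have h5: "\<bar>t^3*(norm v3)\<^sup>2\<bar> \<le> B\<^sup>2"
    using abs_t_le[OF t3, of "(norm v3)\<^sup>2"] n3 by simp
  have "\<bar>rem4 v0 v1 v2 v3 t\<bar> \<le> \<bar>2*(v0 \<bullet> v3)\<bar> + \<bar>2*(v1 \<bullet> v2)\<bar> + \<bar>t*((norm v2)\<^sup>2 + 2*(v1 \<bullet> v3))\<bar> + \<bar>t\<^sup>2*(2*(v2 \<bullet> v3))\<bar> + \<bar>t^3*(norm v3)\<^sup>2\<bar>"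
    unfolding rem4_def by (rule abs5)
  moreover have "\<bar>2*(v0 \<bullet> v3)\<bar> \<le> 2 * B\<^sup>2" using i03 by (simp add: abs_mult)
  moreover have "\<bar>2*(v1 \<bullet> v2)\<bar> \<le> 2 * B\<^sup>2" using i12 by (simp add: abs_mult)
  ultimately show ?thesis using h3 h4 h5 by linarith
qed

lemma mv_inner_bound: "\<bar>(A *v x) \<bullet> (B *v y)\<bar> \<le> spec_norm A * spec_norm B * norm x * norm y"
proof -
  have "\<bar>(A *v x) \<bullet> (B *v y)\<bar> \<le> norm (A *v x) * norm (B *v y)" by (rule Cauchy_Schwarz_ineq2)
  also have "\<dots> \<le> (spec_norm A * norm x) * (spec_norm B * norm y)"
    by (intro mult_mono sn_bound) (auto intro: mult_nonneg_nonneg sn_nonneg)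
  finally show ?thesis by (simp add: algebra_simps)
qed

locale pPH = pP P for P :: "real^'n^'m" +
  fixes H :: "real^'n^'m"
begin

definition "S1 = E0 \<inter> sphere 0 1"
definition "mu1 = Sup ((\<lambda>a. 2 * ((P *v a) \<bullet> (H *v a))) ` S1)"
definition "A1 = {a \<in> S1. 2 * ((P *v a) \<bullet> (H *v a)) = mu1}"
definition "gam = (SOME g. g > 0 \<and> (\<forall>b\<in>Perp. (norm (P *v b))\<^sup>2 \<le> (sig\<^sup>2 - g) * (norm b)\<^sup>2))"
definition "Qf b = sig\<^sup>2 * (norm b)\<^sup>2 - (norm (P *v b))\<^sup>2"
definition "GZ Z a \<beta> = (norm (H *v a))\<^sup>2 + 2 * ((P *v a) \<bullet> (H *v \<beta>) + (P *v \<beta>) \<bullet> (H *v a)) - Qf \<beta> + (P *v a) \<bullet> (Z *v a)"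
definition "BH = spec_norm H"
definition "Rb = 4 * sig * BH / gam"
definition "nu Z = Sup {GZ Z a \<beta> | a \<beta>. a \<in> A1 \<and> \<beta> \<in> Perp \<and> norm \<beta> \<le> Rb}"

lemma S1_compact: "compact S1"
proof -
  have "S1 = sphere 0 1 \<inter> E0" unfolding S1_def by auto
  then show ?thesis using compact_Int_closed[OF compact_sphere E0_closed] by simp
qed

lemma S1_ne: "S1 \<noteq> {}"
  using E0_unit unfolding S1_def by (metis IntI dist_0_norm empty_iff mem_sphere)

lemma mu1_att: "\<exists>a\<in>S1. 2 * ((P *v a) \<bullet> (H *v a)) = mu1 \<and> (\<forall>b\<in>S1. 2 * ((P *v b) \<bullet> (H *v b)) \<le> mu1)"
proof -
  have "continuous_on S1 (\<lambda>a. 2 * ((P *v a) \<bullet> (H *v a)))"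
    by (intro continuous_intros linear_continuous_on matrix_vector_mul_bounded_linear)
  then obtain a0 where a0: "a0 \<in> S1" and mx: "\<forall>b\<in>S1. 2 * ((P *v b) \<bullet> (H *v b)) \<le> 2 * ((P *v a0) \<bullet> (H *v a0))"
    using continuous_attains_sup[OF S1_compact S1_ne] by blast
  have "mu1 = 2 * ((P *v a0) \<bullet> (H *v a0))"
    unfolding mu1_def by (rule cSup_eq_maximum) (use a0 mx in auto)
  then show ?thesis using a0 mx by auto
qed

lemma mu1_max: "a \<in> S1 \<Longrightarrow> 2 * ((P *v a) \<bullet> (H *v a)) \<le> mu1"
  using mu1_att by blast

lemma A1_ne: "A1 \<noteq> {}"
  using mu1_att unfolding A1_def by blast

lemma A1_props: "a \<in> A1 \<Longrightarrow> a \<in> E0 \<and> norm a = 1 \<and> 2 * ((P *v a) \<bullet> (H *v a)) = mu1"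
  unfolding A1_def S1_def by auto

lemma mu1_hom: assumes "a \<in> E0" shows "2 * ((P *v a) \<bullet> (H *v a)) \<le> mu1 * (norm a)\<^sup>2"
proof (cases "a = 0")
  case True then show ?thesis by (simp add: mv_zero_r)
next
  case False
  define u where "u = (1 / norm a) *\<^sub>R a"
  have "u \<in> S1" using False assms E0_sub unfolding S1_def u_def by (auto simp: subspace_def)
  then have "2 * ((P *v u) \<bullet> (H *v u)) \<le> mu1" by (rule mu1_max)
  moreover have "2 * ((P *v a) \<bullet> (H *v a)) = (norm a)\<^sup>2 * (2 * ((P *v u) \<bullet> (H *v u)))"
    using False by (simp add: u_def mv_simps power2_eq_square field_simps)
  ultimately show ?thesis
    by (metis mult.commute mult_right_mono zero_le_power2)
qed

lemma BH_nonneg: "0 \<le> BH" unfolding BH_def by (rule sn_nonneg)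

lemma mu1_bound: "\<bar>mu1\<bar> \<le> 2 * sig * BH"
proof -
  obtain a where a: "a \<in> S1" "2 * ((P *v a) \<bullet> (H *v a)) = mu1" using mu1_att by blast
  have "\<bar>(P *v a) \<bullet> (H *v a)\<bar> \<le> sig * BH"
    using mv_inner_bound[of P a H a] a(1) by (simp add: S1_def sig_def BH_def)
  then show ?thesis using a(2) by linarith
qed

lemma gam_props: "gam > 0" "\<And>b. b \<in> Perp \<Longrightarrow> (norm (P *v b))\<^sup>2 \<le> (sig\<^sup>2 - gam) * (norm b)\<^sup>2"
proof -
  obtain g where "g > 0" "\<And>b. b \<in> Perp \<Longrightarrow> (norm (P *v b))\<^sup>2 \<le> (sig\<^sup>2 - g) * (norm b)\<^sup>2"
    using gap by blast
  then have ex: "\<exists>g. g > 0 \<and> (\<forall>b\<in>Perp. (norm (P *v b))\<^sup>2 \<le> (sig\<^sup>2 - g) * (norm b)\<^sup>2)" by blast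
  show "gam > 0" using someI_ex[OF ex] unfolding gam_def by blast
  fix b assume "b \<in> Perp"
  then show "(norm (P *v b))\<^sup>2 \<le> (sig\<^sup>2 - gam) * (norm b)\<^sup>2" using someI_ex[OF ex] unfolding gam_def by blast
qed

lemma Qf_ge: "b \<in> Perp \<Longrightarrow> Qf b \<ge> gam * (norm b)\<^sup>2"
  using gam_props(2)[of b] unfolding Qf_def by (simp add: algebra_simps)

lemma Qf_nonneg: "b \<in> Perp \<Longrightarrow> Qf b \<ge> 0"
proof -
  assume b: "b \<in> Perp"
  have "0 \<le> gam * (norm b)\<^sup>2" using gam_props(1) by simp
  then show ?thesis using Qf_ge[OF b] by linarith
qed

lemma Rb_nonneg: "0 \<le> Rb"
  unfolding Rb_def using sig_pos BH_nonneg gam_props(1) by simp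

lemma lin_bound:
  assumes "norm a \<le> 1"
  shows "\<bar>2 * ((P *v a) \<bullet> (H *v \<beta>) + (P *v \<beta>) \<bullet> (H *v a))\<bar> \<le> 4 * sig * BH * norm \<beta>"
proof -
  have "\<bar>(P *v a) \<bullet> (H *v \<beta>)\<bar> \<le> sig * BH * norm a * norm \<beta>"
    using mv_inner_bound[of P a H \<beta>] by (simp add: sig_def BH_def)
  also have "\<dots> \<le> sig * BH * 1 * norm \<beta>"
    using assms sig_pos BH_nonneg by (intro mult_right_mono mult_left_mono) auto
  finally have 1: "\<bar>(P *v a) \<bullet> (H *v \<beta>)\<bar> \<le> sig * BH * norm \<beta>" by simp
  have "\<bar>(P *v \<beta>) \<bullet> (H *v a)\<bar> \<le> sig * BH * norm \<beta> * norm a"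
    using mv_inner_bound[of P \<beta> H a] by (simp add: sig_def BH_def)
  also have "\<dots> \<le> sig * BH * norm \<beta> * 1"
    using assms sig_pos BH_nonneg by (intro mult_left_mono) auto
  finally have 2: "\<bar>(P *v \<beta>) \<bullet> (H *v a)\<bar> \<le> sig * BH * norm \<beta>" by simp
  have e: "4 * sig * BH * norm \<beta> = 4 * (sig * BH * norm \<beta>)" by simp
  show ?thesis unfolding abs_le_iff e
    using abs_le_D1[OF 1] abs_le_D2[OF 1] abs_le_D1[OF 2] abs_le_D2[OF 2]
    by (simp only: distrib_left minus_add_distrib) linarith
qed

lemma GZ_restrict:
  assumes "norm a \<le> 1" "\<beta> \<in> Perp" "norm \<beta> \<ge> Rb"
  shows "GZ Z a \<beta> \<le> GZ Z a 0"
proof -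
  have l: "2 * ((P *v a) \<bullet> (H *v \<beta>) + (P *v \<beta>) \<bullet> (H *v a)) \<le> 4 * sig * BH * norm \<beta>"
    using lin_bound[OF assms(1), of \<beta>] by simp
  have q: "Qf \<beta> \<ge> gam * (norm \<beta>)\<^sup>2" by (rule Qf_ge[OF assms(2)])
  have "4 * sig * BH \<le> gam * norm \<beta>"
    using assms(3) gam_props(1) unfolding Rb_def by (simp add: field_simps)
  then have "4 * sig * BH * norm \<beta> \<le> gam * (norm \<beta>)\<^sup>2"
    by (metis mult.commute mult.left_commute mult_right_mono norm_ge_zero power2_eq_square)
  then show ?thesis using l q unfolding GZ_def Qf_def by (simp add: mv_zero_r)
qed

definition "NS Z = {GZ Z a \<beta> | a \<beta>. a \<in> A1 \<and> \<beta> \<in> Perp \<and> norm \<beta> \<le> Rb}"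

lemma NS_ne: "NS Z \<noteq> {}"
proof -
  obtain a where "a \<in> A1" using A1_ne by blast
  moreover have "(0::real^'n) \<in> Perp" using Perp_sub by (simp add: subspace_def)
  ultimately show ?thesis unfolding NS_def using Rb_nonneg by force
qed

lemma GZ_upper:
  assumes "norm a \<le> 1" "\<beta> \<in> Perp" "norm \<beta> \<le> Rb"
  shows "GZ Z a \<beta> \<le> BH\<^sup>2 + 4 * sig * BH * Rb + sig * spec_norm Z"
proof -
  have h: "(norm (H *v a))\<^sup>2 \<le> BH\<^sup>2"
  proof -
    have "norm (H *v a) \<le> BH * norm a" unfolding BH_def by (rule sn_bound)
    also have "\<dots> \<le> BH" using mult_left_mono[of "norm a" 1 BH] assms(1) BH_nonneg by simp
    finally show ?thesis by (intro power_mono) auto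
  qed
  have l: "2 * ((P *v a) \<bullet> (H *v \<beta>) + (P *v \<beta>) \<bullet> (H *v a)) \<le> 4 * sig * BH * Rb"
  proof -
    have "2 * ((P *v a) \<bullet> (H *v \<beta>) + (P *v \<beta>) \<bullet> (H *v a)) \<le> 4 * sig * BH * norm \<beta>"
      using lin_bound[OF assms(1), of \<beta>] by simp
    also have "\<dots> \<le> 4 * sig * BH * Rb" using assms(3) sig_pos BH_nonneg by (intro mult_left_mono) auto
    finally show ?thesis .
  qed
  have z: "(P *v a) \<bullet> (Z *v a) \<le> sig * spec_norm Z"
  proof -
    have "\<bar>(P *v a) \<bullet> (Z *v a)\<bar> \<le> spec_norm P * spec_norm Z * norm a * norm a" by (rule mv_inner_bound)
    also have "\<dots> \<le> spec_norm P * spec_norm Z * 1 * 1"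
      using assms(1) by (intro mult_mono mult_nonneg_nonneg sn_nonneg) auto
    finally show ?thesis by (simp add: sig_def)
  qed
  show ?thesis using h l z Qf_nonneg[OF assms(2)] unfolding GZ_def by linarith
qed

lemma NS_bdd: "bdd_above (NS Z)"
  unfolding NS_def bdd_above_def
  by (rule exI[of _ "BH\<^sup>2 + 4 * sig * BH * Rb + sig * spec_norm Z"]) (auto intro!: GZ_upper simp: A1_def S1_def)

lemma nu_NS: "nu Z = Sup (NS Z)" unfolding nu_def NS_def by simp

lemma nu_ge: assumes "a \<in> A1" "\<beta> \<in> Perp" shows "GZ Z a \<beta> \<le> nu Z"
proof (cases "norm \<beta> \<le> Rb")
  case True
  then have "GZ Z a \<beta> \<in> NS Z" using assms unfolding NS_def by blast
  then show ?thesis unfolding nu_NS by (intro cSup_upper NS_bdd)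
next
  case False
  have a1: "norm a \<le> 1" using assms A1_props by simp
  have "GZ Z a \<beta> \<le> GZ Z a 0" using GZ_restrict[OF a1 assms(2)] False by simp
  moreover have "(0::real^'n) \<in> Perp" using Perp_sub by (simp add: subspace_def)
  then have "GZ Z a 0 \<in> NS Z" using assms Rb_nonneg unfolding NS_def by force
  then have "GZ Z a 0 \<le> nu Z" unfolding nu_NS by (intro cSup_upper NS_bdd)
  ultimately show ?thesis by linarith
qed

lemma nu_approx: assumes "e > 0" obtains a \<beta> where "a \<in> A1" "\<beta> \<in> Perp" "norm \<beta> \<le> Rb" "GZ Z a \<beta> > nu Z - e"
proof -
  have "nu Z - e < Sup (NS Z)" using assms nu_NS by simp
  then obtain x where "x \<in> NS Z" "nu Z - e < x" using less_cSup_iff[OF NS_ne NS_bdd] by blast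
  then show ?thesis using that unfolding NS_def by blast
qed

lemma nu_le: assumes "\<And>a \<beta>. a \<in> A1 \<Longrightarrow> \<beta> \<in> Perp \<Longrightarrow> norm \<beta> \<le> Rb \<Longrightarrow> GZ Z a \<beta> \<le> c" shows "nu Z \<le> c"
  unfolding nu_NS by (rule cSup_least[OF NS_ne]) (use assms in \<open>auto simp: NS_def\<close>)

end

context pPH
begin

definition "Yt Z t = P + t *\<^sub>R H + (t\<^sup>2 / 2) *\<^sub>R Z"
definition "ratio Z t = ((spec_norm (Yt Z t))\<^sup>2 - sig\<^sup>2 - t * mu1) / t\<^sup>2"

lemma Yx_expand:
  "Yt Z t *v (a + t *\<^sub>R \<beta>) = P *v a + t *\<^sub>R (P *v \<beta> + H *v a) + t\<^sup>2 *\<^sub>R (H *v \<beta> + (1/2) *\<^sub>R (Z *v a)) + t^3 *\<^sub>R ((1/2) *\<^sub>R (Z *v \<beta>))"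
  unfolding Yt_def by (simp add: mv_simps algebra_simps power2_eq_square power3_eq_cube)

lemma GZ_alt:
  "(norm (P *v \<beta> + H *v a))\<^sup>2 + 2 * ((P *v a) \<bullet> (H *v \<beta> + (1/2) *\<^sub>R (Z *v a))) - sig\<^sup>2 * (norm \<beta>)\<^sup>2 = GZ Z a \<beta>"
  unfolding GZ_def Qf_def
  by (simp add: norm_add_sq inner_add_right inner_commute algebra_simps)

lemma theta_sq_ge:
  assumes "x \<noteq> 0"
  shows "(spec_norm A)\<^sup>2 \<ge> (norm (A *v x))\<^sup>2 / (norm x)\<^sup>2"
proof -
  have "norm (A *v x) \<le> spec_norm A * norm x" by (rule sn_bound)
  then have "(norm (A *v x))\<^sup>2 \<le> (spec_norm A * norm x)\<^sup>2" by (intro power_mono) auto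
  then show ?thesis using assms by (simp add: power_mult_distrib divide_le_eq)
qed

lemma lower_fixed:
  assumes a: "a \<in> A1" and b: "\<beta> \<in> Perp"
  shows "((\<lambda>t. ((norm (Yt Z t *v (a + t *\<^sub>R \<beta>)))\<^sup>2 / (1 + t\<^sup>2 * (norm \<beta>)\<^sup>2) - sig\<^sup>2 - t * mu1) / t\<^sup>2)
          \<longlongrightarrow> GZ Z a \<beta>) (at_right 0)"
proof -
  have aE: "a \<in> E0" and an: "norm a = 1" and am: "2 * ((P *v a) \<bullet> (H *v a)) = mu1" using A1_props[OF a] by auto
  define v0 where "v0 = P *v a"
  define v1 where "v1 = P *v \<beta> + H *v a"
  define v2 where "v2 = H *v \<beta> + (1/2) *\<^sub>R (Z *v a)"
  define v3 where "v3 = (1/2) *\<^sub>R (Z *v \<beta>)"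
  define c2 where "c2 = (norm v1)\<^sup>2 + 2 * (v0 \<bullet> v2)"
  have n0: "(norm v0)\<^sup>2 = sig\<^sup>2" using E0_normP[OF aE] an by (simp add: v0_def)
  have i01: "2 * (v0 \<bullet> v1) = mu1" using am EP_orth(2)[OF aE b] by (simp add: v0_def v1_def inner_add_right)
  have exp: "(norm (Yt Z t *v (a + t *\<^sub>R \<beta>)))\<^sup>2 = sig\<^sup>2 + t * mu1 + t\<^sup>2 * c2 + t^3 * rem4 v0 v1 v2 v3 t" for t
    unfolding Yx_expand poly4' v0_def[symmetric] v1_def[symmetric] v2_def[symmetric] v3_def[symmetric] c2_def
    using n0 i01 by (simp add: algebra_simps)
  have eq: "((norm (Yt Z t *v (a + t *\<^sub>R \<beta>)))\<^sup>2 / (1 + t\<^sup>2 * (norm \<beta>)\<^sup>2) - sig\<^sup>2 - t * mu1) / t\<^sup>2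
      = (c2 + t * rem4 v0 v1 v2 v3 t - sig\<^sup>2 * (norm \<beta>)\<^sup>2 - t * mu1 * (norm \<beta>)\<^sup>2) / (1 + t\<^sup>2 * (norm \<beta>)\<^sup>2)"
    if "t > 0" for t
  proof -
    define d where "d = 1 + t\<^sup>2 * (norm \<beta>)\<^sup>2"
    define K where "K = c2 + t * rem4 v0 v1 v2 v3 t - sig\<^sup>2 * (norm \<beta>)\<^sup>2 - t * mu1 * (norm \<beta>)\<^sup>2"
    define N where "N = sig\<^sup>2 + t * mu1 + t\<^sup>2 * c2 + t^3 * rem4 v0 v1 v2 v3 t"
    have d: "d > 0" unfolding d_def by (simp add: add_pos_nonneg)
    have k: "N - (sig\<^sup>2 + t * mu1) * d = t\<^sup>2 * K"
      unfolding N_def d_def K_def by (simp add: algebra_simps power2_eq_square power3_eq_cube)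
    have "N / d - sig\<^sup>2 - t * mu1 = (N - (sig\<^sup>2 + t * mu1) * d) / d"
      using d by (simp add: field_simps)
    also have "\<dots> = t\<^sup>2 * K / d" by (simp add: k)
    finally have "(N / d - sig\<^sup>2 - t * mu1) / t\<^sup>2 = K / d" using that by simp
    then show ?thesis unfolding exp N_def[symmetric] d_def[symmetric] K_def[symmetric] .
  qed
  have lim: "((\<lambda>t. (c2 + t * rem4 v0 v1 v2 v3 t - sig\<^sup>2 * (norm \<beta>)\<^sup>2 - t * mu1 * (norm \<beta>)\<^sup>2) / (1 + t\<^sup>2 * (norm \<beta>)\<^sup>2))
      \<longlongrightarrow> (c2 + 0 * rem4 v0 v1 v2 v3 0 - sig\<^sup>2 * (norm \<beta>)\<^sup>2 - 0 * mu1 * (norm \<beta>)\<^sup>2) / (1 + 0\<^sup>2 * (norm \<beta>)\<^sup>2)) (at_right 0)"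
    unfolding rem4_def by (intro tendsto_intros) auto
  have val: "(c2 + 0 * rem4 v0 v1 v2 v3 0 - sig\<^sup>2 * (norm \<beta>)\<^sup>2 - 0 * mu1 * (norm \<beta>)\<^sup>2) / (1 + 0\<^sup>2 * (norm \<beta>)\<^sup>2) = GZ Z a \<beta>"
    using GZ_alt[of \<beta> a Z] by (simp add: c2_def v0_def v1_def v2_def)
  have ev: "eventually (\<lambda>t. t > 0) (at_right (0::real))" by (simp add: eventually_at_right_less)
  show ?thesis
    using lim unfolding val
    by (rule Lim_transform_eventually) (use ev eq in \<open>auto elim: eventually_mono\<close>)
qed

lemma ratio_ge_fixed:
  assumes a: "a \<in> A1" and b: "\<beta> \<in> Perp" and t: "t > 0"
  shows "ratio Z t \<ge> ((norm (Yt Z t *v (a + t *\<^sub>R \<beta>)))\<^sup>2 / (1 + t\<^sup>2 * (norm \<beta>)\<^sup>2) - sig\<^sup>2 - t * mu1) / t\<^sup>2"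
proof -
  have aE: "a \<in> E0" and an: "norm a = 1" using A1_props[OF a] by auto
  have nx: "(norm (a + t *\<^sub>R \<beta>))\<^sup>2 = 1 + t\<^sup>2 * (norm \<beta>)\<^sup>2"
    using EP_orth(1)[OF aE b] an by (simp add: norm_add_scale_sq)
  have "a + t *\<^sub>R \<beta> \<noteq> 0" using nx by (metis add_pos_nonneg norm_zero power2_eq_square mult_zero_left not_one_le_zero zero_le_mult_iff zero_le_power2 zero_less_one add.commute less_numeral_extra(3) one_add_one)
  then have "(spec_norm (Yt Z t))\<^sup>2 \<ge> (norm (Yt Z t *v (a + t *\<^sub>R \<beta>)))\<^sup>2 / (1 + t\<^sup>2 * (norm \<beta>)\<^sup>2)"
    using theta_sq_ge nx by metis
  then show ?thesis unfolding ratio_def using t by (intro divide_right_mono) auto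
qed

lemma ratio_lower:
  assumes e: "e > 0"
  shows "eventually (\<lambda>t. ratio Z t > nu Z - e) (at_right 0)"
proof -
  obtain a \<beta> where a: "a \<in> A1" and b: "\<beta> \<in> Perp" and "norm \<beta> \<le> Rb" and g: "GZ Z a \<beta> > nu Z - e / 2"
    using nu_approx[of "e/2" Z] e by auto
  have "eventually (\<lambda>t. ((norm (Yt Z t *v (a + t *\<^sub>R \<beta>)))\<^sup>2 / (1 + t\<^sup>2 * (norm \<beta>)\<^sup>2) - sig\<^sup>2 - t * mu1) / t\<^sup>2 > nu Z - e) (at_right 0)"
    using order_tendstoD(1)[OF lower_fixed[OF a b, of Z], of "nu Z - e"] g e by linarith
  moreover have "eventually (\<lambda>t. t > 0) (at_right (0::real))" by (simp add: eventually_at_right_less)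
  ultimately show ?thesis
  proof eventually_elim
    case (elim t)
    show ?case using ratio_ge_fixed[OF a b elim(2), where Z=Z] elim(1) by linarith
  qed
qed

end

lemma mv_tendsto: "(f \<longlongrightarrow> x) F \<Longrightarrow> ((\<lambda>n. (A::real^'n^'m) *v f n) \<longlongrightarrow> A *v x) F"
  by (rule bounded_linear.tendsto[OF matrix_vector_mul_bounded_linear])

context pPH
begin

lemma GZ_tendsto:
  assumes "(f \<longlongrightarrow> a) F" "(g \<longlongrightarrow> b) F"
  shows "((\<lambda>n. GZ Z (f n) (g n)) \<longlongrightarrow> GZ Z a b) F"
  unfolding GZ_def Qf_def
  by (intro tendsto_intros mv_tendsto assms)

lemma lemma_U:
  assumes e: "e > 0" and K: "K \<ge> 0"
  shows "\<exists>d>0. \<forall>a \<beta>. a \<in> E0 \<longrightarrow> norm a \<le> 1 \<longrightarrow> (norm a)\<^sup>2 \<ge> 1 - d \<longrightarrow> 2 * ((P *v a) \<bullet> (H *v a)) \<ge> mu1 - d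
          \<longrightarrow> \<beta> \<in> Perp \<longrightarrow> norm \<beta> \<le> K \<longrightarrow> GZ Z a \<beta> \<le> nu Z + e"
proof (rule ccontr)
  assume "\<not> ?thesis"
  then have "\<forall>n. \<exists>a \<beta>. a \<in> E0 \<and> norm a \<le> 1 \<and> (norm a)\<^sup>2 \<ge> 1 - inverse (real (Suc n)) \<and> 2 * ((P *v a) \<bullet> (H *v a)) \<ge> mu1 - inverse (real (Suc n))
          \<and> \<beta> \<in> Perp \<and> norm \<beta> \<le> K \<and> GZ Z a \<beta> > nu Z + e"
    by (metis inverse_positive_iff_positive not_le of_nat_0_less_iff zero_less_Suc)
  then obtain sa sb where s: "\<And>n. sa n \<in> E0 \<and> norm (sa n) \<le> 1 \<and> (norm (sa n))\<^sup>2 \<ge> 1 - inverse (real (Suc n)) \<and> 2 * ((P *v sa n) \<bullet> (H *v sa n)) \<ge> mu1 - inverse (real (Suc n))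
          \<and> sb n \<in> Perp \<and> norm (sb n) \<le> K \<and> GZ Z (sa n) (sb n) > nu Z + e"
    by metis
  define KS where "KS = (cball 0 1 \<inter> E0) \<times> (cball 0 K \<inter> Perp)"
  have cKS: "compact KS" unfolding KS_def
    by (intro compact_Times compact_Int_closed compact_cball E0_closed Perp_closed)
  have inKS: "\<forall>n. (sa n, sb n) \<in> KS" using s unfolding KS_def by auto
  obtain l r where l: "l \<in> KS" and r: "strict_mono r" and lim: "((\<lambda>n. (sa n, sb n)) \<circ> r) \<longlonglongrightarrow> l"
    using seq_compactE[OF compact_imp_seq_compact[OF cKS] inKS] by blast
  obtain a0 b0 where l0: "l = (a0, b0)" by (cases l)
  have la: "(\<lambda>n. sa (r n)) \<longlonglongrightarrow> a0" using tendsto_fst[OF lim] l0 by (simp add: o_def)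
  have lb: "(\<lambda>n. sb (r n)) \<longlonglongrightarrow> b0" using tendsto_snd[OF lim] l0 by (simp add: o_def)
  have a0E: "a0 \<in> E0" and a0n: "norm a0 \<le> 1" and b0P: "b0 \<in> Perp" using l l0 unfolding KS_def by auto
  have inv_le: "inverse (real (Suc (r n))) \<le> inverse (real (Suc n))" for n
    using seq_suble[OF r, of n] by (simp add: le_imp_inverse_le)
  have "1 \<le> (norm a0)\<^sup>2"
  proof (rule LIMSEQ_le[of "\<lambda>n. 1 + - inverse (real (Suc n))" 1 "\<lambda>n. (norm (sa (r n)))\<^sup>2"])
    show "(\<lambda>n. 1 + - inverse (real (Suc n))) \<longlonglongrightarrow> 1" by (rule LIMSEQ_inverse_real_of_nat_add_minus)
    show "(\<lambda>n. (norm (sa (r n)))\<^sup>2) \<longlonglongrightarrow> (norm a0)\<^sup>2" by (intro tendsto_intros la)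
    show "\<exists>N. \<forall>n\<ge>N. 1 + - inverse (real (Suc n)) \<le> (norm (sa (r n)))\<^sup>2"
    proof (intro exI[of _ 0] allI impI)
      fix n :: nat
      have "1 - inverse (real (Suc (r n))) \<le> (norm (sa (r n)))\<^sup>2" using s[of "r n"] by blast
      then show "1 + - inverse (real (Suc n)) \<le> (norm (sa (r n)))\<^sup>2" using inv_le[of n] by linarith
    qed
  qed
  moreover have "(norm a0)\<^sup>2 \<le> 1" using a0n by (simp add: power_le_one)
  ultimately have "(norm a0)\<^sup>2 = 1" by linarith
  then have a0n1: "norm a0 = 1" using norm_ge_zero[of a0] by (simp add: power2_eq_1_iff)
  have "mu1 \<le> 2 * ((P *v a0) \<bullet> (H *v a0))"
  proof (rule LIMSEQ_le[of "\<lambda>n. mu1 + - inverse (real (Suc n))" mu1 "\<lambda>n. 2 * ((P *v sa (r n)) \<bullet> (H *v sa (r n)))"])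
    show "(\<lambda>n. mu1 + - inverse (real (Suc n))) \<longlonglongrightarrow> mu1" by (rule LIMSEQ_inverse_real_of_nat_add_minus)
    show "(\<lambda>n. 2 * ((P *v sa (r n)) \<bullet> (H *v sa (r n)))) \<longlonglongrightarrow> 2 * ((P *v a0) \<bullet> (H *v a0))"
      by (intro tendsto_intros mv_tendsto la)
    show "\<exists>N. \<forall>n\<ge>N. mu1 + - inverse (real (Suc n)) \<le> 2 * ((P *v sa (r n)) \<bullet> (H *v sa (r n)))"
    proof (intro exI[of _ 0] allI impI)
      fix n :: nat
      have "mu1 - inverse (real (Suc (r n))) \<le> 2 * ((P *v sa (r n)) \<bullet> (H *v sa (r n)))" using s[of "r n"] by blast
      then show "mu1 + - inverse (real (Suc n)) \<le> 2 * ((P *v sa (r n)) \<bullet> (H *v sa (r n)))" using inv_le[of n] by linarith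
    qed
  qed
  moreover have "a0 \<in> S1" using a0E a0n1 unfolding S1_def by simp
  ultimately have a0A: "a0 \<in> A1" using mu1_max unfolding A1_def by (simp add: antisym)
  have "nu Z + e \<le> GZ Z a0 b0"
  proof (rule LIMSEQ_le_const[of "\<lambda>n. GZ Z (sa (r n)) (sb (r n))"])
    show "(\<lambda>n. GZ Z (sa (r n)) (sb (r n))) \<longlonglongrightarrow> GZ Z a0 b0" by (rule GZ_tendsto[OF la lb])
    show "\<exists>N. \<forall>n\<ge>N. nu Z + e \<le> GZ Z (sa (r n)) (sb (r n))" using s less_imp_le by blast
  qed
  moreover have "GZ Z a0 b0 \<le> nu Z" by (rule nu_ge[OF a0A b0P])
  ultimately show False using e by linarith
qed

end

lemma arith_b:
  fixes g c d t nb :: real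
  assumes g: "g > 0" and c: "c \<ge> 0" and d: "d \<ge> 0" and t: "t > 0" and nb: "nb \<ge> 0"
    and ineq: "g * nb\<^sup>2 \<le> c * t * nb + d * t\<^sup>2"
  shows "nb \<le> (1 + (c + d) / g) * t"
proof (cases "nb \<le> t")
  case True
  have "0 \<le> (c + d) / g * t" using c d g t by simp
  then show ?thesis using True by (simp add: algebra_simps)
next
  case False
  then have tn: "t < nb" by simp
  have "d * t\<^sup>2 \<le> d * (t * nb)" unfolding power2_eq_square
    using d t tn by (intro mult_left_mono) auto
  then have "g * nb\<^sup>2 \<le> (c + d) * t * nb" using ineq by (simp add: algebra_simps)
  then have "nb * (g * nb) \<le> nb * ((c + d) * t)" by (simp add: power2_eq_square algebra_simps)
  then have "g * nb \<le> (c + d) * t" using tn t by (meson mult_le_cancel_left_pos order_less_trans)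
  then have "nb \<le> (c + d) * t / g" using g by (simp add: field_simps)
  also have "\<dots> \<le> (1 + (c + d) / g) * t" using t by (simp add: field_simps)
  finally show ?thesis .
qed

context pPH
begin

definition "BZ (Z::real^'n^'m) = sig + BH + spec_norm Z + 1"

lemma BZ_ge: "sig \<le> BZ Z" "BH \<le> BZ Z" "spec_norm Z \<le> BZ Z" "1 \<le> BZ Z" "0 < BZ Z"
  unfolding BZ_def using sig_pos BH_nonneg sn_nonneg[of Z] by auto

lemma mvB: "norm (P *v x) \<le> BZ Z * norm x" "norm (H *v x) \<le> BZ Z * norm x" "norm (Z *v x) \<le> BZ Z * norm x"
proof -
  show "norm (P *v x) \<le> BZ Z * norm x"
    using normP_le[of x] BZ_ge(1)[of Z] by (meson mult_right_mono norm_ge_zero order_trans)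
  show "norm (H *v x) \<le> BZ Z * norm x"
    using sn_bound[of H x] BZ_ge(2)[of Z] unfolding BH_def by (meson mult_right_mono norm_ge_zero order_trans)
  show "norm (Z *v x) \<le> BZ Z * norm x"
    using sn_bound[of Z x] BZ_ge(3)[of Z] by (meson mult_right_mono norm_ge_zero order_trans)
qed

lemma gen_expand:
  "(norm (Yt Z t *v x))\<^sup>2 = (norm (P *v x))\<^sup>2 + 2 * t * ((P *v x) \<bullet> (H *v x))
     + t\<^sup>2 * ((norm (H *v x))\<^sup>2 + 2 * ((P *v x) \<bullet> ((1/2) *\<^sub>R (Z *v x))))
     + t^3 * rem4 (P *v x) (H *v x) ((1/2) *\<^sub>R (Z *v x)) 0 t"
proof -
  have "Yt Z t *v x = P *v x + t *\<^sub>R (H *v x) + t\<^sup>2 *\<^sub>R ((1/2) *\<^sub>R (Z *v x)) + t^3 *\<^sub>R 0"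
    using Yx_expand[of Z t x 0] by (simp add: mv_zero_r)
  then show ?thesis by (simp only: poly4')
qed

lemma gen_bound:
  assumes x: "norm x \<le> 1" and t: "0 \<le> t" "t \<le> 1"
  shows "\<bar>(norm (Yt Z t *v x))\<^sup>2 - (norm (P *v x))\<^sup>2 - 2 * t * ((P *v x) \<bullet> (H *v x))\<bar> \<le> 13 * (BZ Z)\<^sup>2 * t\<^sup>2"
proof -
  define B where "B = BZ Z"
  have B0: "0 < B" using BZ_ge by (simp add: B_def)
  have nP: "norm (P *v x) \<le> B" using mvB(1)[where x=x and Z=Z] x B0 unfolding B_def by (meson mult_left_le_one_le norm_ge_zero order_trans less_imp_le mult_right_le_one_le)
  have nH: "norm (H *v x) \<le> B" using mvB(2)[where x=x and Z=Z] x B0 unfolding B_def by (meson mult_left_le_one_le norm_ge_zero order_trans less_imp_le mult_right_le_one_le)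
  have nZ: "norm ((1/2) *\<^sub>R (Z *v x)) \<le> B"
  proof -
    have "norm (Z *v x) \<le> B" using mvB(3)[where x=x and Z=Z] x B0 unfolding B_def by (meson mult_left_le_one_le norm_ge_zero order_trans less_imp_le mult_right_le_one_le)
    then show ?thesis using B0 by simp
  qed
  have r: "\<bar>rem4 (P *v x) (H *v x) ((1/2) *\<^sub>R (Z *v x)) 0 t\<bar> \<le> 10 * B\<^sup>2"
    by (rule rem4_bound) (use nP nH nZ B0 t in auto)
  have c: "\<bar>(norm (H *v x))\<^sup>2 + 2 * ((P *v x) \<bullet> ((1/2) *\<^sub>R (Z *v x)))\<bar> \<le> 3 * B\<^sup>2"
  proof -
    have h1: "(norm (H *v x))\<^sup>2 \<le> B\<^sup>2" using nH by (intro power_mono) auto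
    have h0: "0 \<le> (norm (H *v x))\<^sup>2" by simp
    have h2: "\<bar>(P *v x) \<bullet> ((1/2) *\<^sub>R (Z *v x))\<bar> \<le> B\<^sup>2" using nP nZ by (rule inner_le_sq)
    show ?thesis unfolding abs_le_iff using h0 h1 abs_le_D1[OF h2] abs_le_D2[OF h2] by (intro conjI) linarith+
  qed
  have t2: "t\<^sup>2 * \<bar>(norm (H *v x))\<^sup>2 + 2 * ((P *v x) \<bullet> ((1/2) *\<^sub>R (Z *v x)))\<bar> \<le> t\<^sup>2 * (3 * B\<^sup>2)"
    using c by (intro mult_left_mono) auto
  have t3: "t^3 * \<bar>rem4 (P *v x) (H *v x) ((1/2) *\<^sub>R (Z *v x)) 0 t\<bar> \<le> t\<^sup>2 * (10 * B\<^sup>2)"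
  proof -
    have "t^3 * \<bar>rem4 (P *v x) (H *v x) ((1/2) *\<^sub>R (Z *v x)) 0 t\<bar> \<le> t^3 * (10 * B\<^sup>2)"
      using r t by (intro mult_left_mono) auto
    also have "\<dots> \<le> t\<^sup>2 * (10 * B\<^sup>2)"
    proof -
      have "t^3 \<le> t\<^sup>2" using t by (simp add: power_decreasing)
      then show ?thesis by (intro mult_right_mono) auto
    qed
    finally show ?thesis .
  qed
  show ?thesis unfolding gen_expand B_def[symmetric]
  proof -
    define c2 where "c2 = (norm (H *v x))\<^sup>2 + 2 * ((P *v x) \<bullet> ((1/2) *\<^sub>R (Z *v x)))"
    define r3 where "r3 = rem4 (P *v x) (H *v x) ((1/2) *\<^sub>R (Z *v x)) 0 t"
    have e1: "\<bar>t\<^sup>2 * c2\<bar> \<le> t\<^sup>2 * (3 * B\<^sup>2)" using t2 by (simp add: c2_def abs_mult)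
    have e2: "\<bar>t^3 * r3\<bar> \<le> t\<^sup>2 * (10 * B\<^sup>2)" using t3 t by (simp add: r3_def abs_mult)
    have "\<bar>t\<^sup>2 * c2 + t^3 * r3\<bar> \<le> \<bar>t\<^sup>2 * c2\<bar> + \<bar>t^3 * r3\<bar>" by (rule abs_triangle_ineq)
    also have "\<dots> \<le> 13 * B\<^sup>2 * t\<^sup>2" using e1 e2 by (simp add: algebra_simps)
    finally show "\<bar>(norm (P *v x))\<^sup>2 + 2 * t * ((P *v x) \<bullet> (H *v x)) + t\<^sup>2 * ((norm (H *v x))\<^sup>2 + 2 * ((P *v x) \<bullet> ((1 / 2) *\<^sub>R (Z *v x)))) + t ^ 3 * rem4 (P *v x) (H *v x) ((1 / 2) *\<^sub>R (Z *v x)) 0 t - (norm (P *v x))\<^sup>2 - 2 * t * ((P *v x) \<bullet> (H *v x))\<bar> \<le> 13 * B\<^sup>2 * t\<^sup>2"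
      unfolding c2_def r3_def by simp
  qed
qed

lemma mu1_le_B: "\<bar>mu1\<bar> \<le> 2 * (BZ Z)\<^sup>2"
proof -
  have "sig * BH \<le> BZ Z * BZ Z" using BZ_ge[of Z] sig_pos BH_nonneg by (intro mult_mono) auto
  then show ?thesis using mu1_bound by (simp add: power2_eq_square)
qed

lemma f_lower:
  assumes t: "0 < t" "t \<le> 1"
  shows "(spec_norm (Yt Z t))\<^sup>2 \<ge> sig\<^sup>2 + t * mu1 - 13 * (BZ Z)\<^sup>2 * t\<^sup>2"
proof -
  obtain a0 where a0: "a0 \<in> A1" using A1_ne by blast
  have aE: "a0 \<in> E0" and an: "norm a0 = 1" and am: "2 * ((P *v a0) \<bullet> (H *v a0)) = mu1" using A1_props[OF a0] by auto
  have "(spec_norm (Yt Z t))\<^sup>2 \<ge> (norm (Yt Z t *v a0))\<^sup>2 / (norm a0)\<^sup>2"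
    by (rule theta_sq_ge) (use an in auto)
  then have f: "(spec_norm (Yt Z t))\<^sup>2 \<ge> (norm (Yt Z t *v a0))\<^sup>2" using an by simp
  have g: "\<bar>(norm (Yt Z t *v a0))\<^sup>2 - (norm (P *v a0))\<^sup>2 - 2 * t * ((P *v a0) \<bullet> (H *v a0))\<bar> \<le> 13 * (BZ Z)\<^sup>2 * t\<^sup>2"
    by (rule gen_bound) (use an t in auto)
  have p: "(norm (P *v a0))\<^sup>2 = sig\<^sup>2" using E0_normP[OF aE] an by simp
  have "2 * t * ((P *v a0) \<bullet> (H *v a0)) = t * mu1" using am by (simp add: algebra_simps)
  then show ?thesis using f abs_le_D2[OF g] p by linarith
qed

lemma upper_decomp:
  obtains a b where "a \<in> E0" "b \<in> Perp" "(norm a)\<^sup>2 + (norm b)\<^sup>2 = 1"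
    "(spec_norm A)\<^sup>2 = (norm (A *v (a + b)))\<^sup>2"
proof -
  obtain x where x: "norm x = 1" "norm (A *v x) = spec_norm A" using sn_attained by blast
  obtain a b where ab: "a \<in> E0" "b \<in> Perp" "x = a + b" by (rule decomp)
  have "(norm x)\<^sup>2 = (norm a)\<^sup>2 + (norm b)\<^sup>2"
    using EP_orth(1)[OF ab(1,2)] ab(3) by (simp add: norm_add_sq)
  then show ?thesis using that[OF ab(1,2)] x ab(3) by simp
qed

lemma norm_ab_one:
  assumes a: "a \<in> E0" and b: "b \<in> Perp" and n: "(norm a)\<^sup>2 + (norm b)\<^sup>2 = 1"
  shows "norm (a + b) = 1"
proof -
  have "(norm (a + b))\<^sup>2 = 1" using n EP_orth(1)[OF a b] by (simp add: norm_add_sq)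
  then show ?thesis using norm_ge_zero[of "a + b"] by (simp add: power2_eq_1_iff)
qed

lemma decomp_facts:
  assumes a: "a \<in> E0" and b: "b \<in> Perp" and n: "(norm a)\<^sup>2 + (norm b)\<^sup>2 = 1"
  shows "(norm (P *v (a + b)))\<^sup>2 = sig\<^sup>2 * (norm a)\<^sup>2 + (norm (P *v b))\<^sup>2"
    and "2 * ((P *v (a + b)) \<bullet> (H *v (a + b))) \<le> 2 * ((P *v a) \<bullet> (H *v a)) + 4 * (BZ Z)\<^sup>2 * norm b"
    and "norm a \<le> 1" "norm b \<le> 1"
proof -
  show na: "norm a \<le> 1" using n by (metis abs_norm_cancel abs_square_le_1 le_add_same_cancel1 zero_le_power2)
  show nb: "norm b \<le> 1" using n by (metis abs_norm_cancel abs_square_le_1 le_add_same_cancel2 zero_le_power2)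
  show "(norm (P *v (a + b)))\<^sup>2 = sig\<^sup>2 * (norm a)\<^sup>2 + (norm (P *v b))\<^sup>2"
    using E0_normP[OF a] EP_orth(2)[OF a b] by (simp add: mv_simps norm_add_sq)
  define B where "B = BZ Z"
  have B0: "0 < B" using BZ_ge by (simp add: B_def)
  have e: "(P *v (a + b)) \<bullet> (H *v (a + b)) = (P *v a) \<bullet> (H *v a) + (P *v a) \<bullet> (H *v b) + (P *v b) \<bullet> (H *v (a + b))"
    by (simp add: mv_simps inner_add_left inner_add_right)
  have nPa: "norm (P *v a) \<le> B" using mvB(1)[where x=a and Z=Z] na B0 unfolding B_def by (meson mult_left_le_one_le norm_ge_zero order_trans less_imp_le mult_right_le_one_le)
  have nHb: "norm (H *v b) \<le> B * norm b" using mvB(2)[where x=b and Z=Z] unfolding B_def .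
  have nPb: "norm (P *v b) \<le> B * norm b" using mvB(1)[where x=b and Z=Z] unfolding B_def .
  have nHx: "norm (H *v (a + b)) \<le> B"
  proof -
    have "norm (a + b) \<le> 1" using norm_ab_one[OF a b n] by simp
    then show ?thesis using mvB(2)[where x="a+b" and Z=Z] B0 unfolding B_def by (meson mult_left_le_one_le norm_ge_zero order_trans less_imp_le mult_right_le_one_le)
  qed
  have i1: "\<bar>(P *v a) \<bullet> (H *v b)\<bar> \<le> B * (B * norm b)"
  proof -
    have "\<bar>(P *v a) \<bullet> (H *v b)\<bar> \<le> norm (P *v a) * norm (H *v b)" by (rule Cauchy_Schwarz_ineq2)
    also have "\<dots> \<le> B * (B * norm b)" using nPa nHb B0 by (intro mult_mono) auto
    finally show ?thesis .
  qed
  have i2: "\<bar>(P *v b) \<bullet> (H *v (a + b))\<bar> \<le> (B * norm b) * B"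
  proof -
    have "\<bar>(P *v b) \<bullet> (H *v (a + b))\<bar> \<le> norm (P *v b) * norm (H *v (a + b))" by (rule Cauchy_Schwarz_ineq2)
    also have "\<dots> \<le> (B * norm b) * B" using nPb nHx B0 by (intro mult_mono) auto
    finally show ?thesis .
  qed
  have q: "B * (B * norm b) = B\<^sup>2 * norm b" "(B * norm b) * B = B\<^sup>2 * norm b" by (simp_all add: power2_eq_square)
  show "2 * ((P *v (a + b)) \<bullet> (H *v (a + b))) \<le> 2 * ((P *v a) \<bullet> (H *v a)) + 4 * (BZ Z)\<^sup>2 * norm b"
  proof -
    have q2: "4 * B\<^sup>2 * norm b = 4 * (B\<^sup>2 * norm b)" by simp
    show ?thesis unfolding e B_def[symmetric] distrib_left q2 using abs_le_D1[OF i1] abs_le_D1[OF i2] q by linarith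
  qed
qed

definition "KZ (Z::real^'n^'m) = 1 + (6 * (BZ Z)\<^sup>2 + 26 * (BZ Z)\<^sup>2) / gam"

lemma KZ_ge: "KZ Z \<ge> 1"
  unfolding KZ_def using gam_props(1) by simp

lemma b_small:
  assumes a: "a \<in> E0" and b: "b \<in> Perp" and n: "(norm a)\<^sup>2 + (norm b)\<^sup>2 = 1"
    and f: "(spec_norm (Yt Z t))\<^sup>2 = (norm (Yt Z t *v (a + b)))\<^sup>2" and t: "0 < t" "t \<le> 1"
  shows "norm b \<le> KZ Z * t"
proof -
  define B2 where "B2 = (BZ Z)\<^sup>2"
  define F where "F = (spec_norm (Yt Z t))\<^sup>2"
  define PX where "PX = (norm (P *v (a + b)))\<^sup>2"
  define PH where "PH = (P *v (a + b)) \<bullet> (H *v (a + b))"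
  define na2 where "na2 = (norm a)\<^sup>2"
  define nb2 where "nb2 = (norm b)\<^sup>2"
  define nb where "nb = norm b"
  define e where "e = 13 * B2 * t\<^sup>2"
  have xn: "norm (a + b) \<le> 1" using norm_ab_one[OF a b n] by simp
  have F1: "F \<le> PX + 2 * t * PH + e"
    using abs_le_D1[OF gen_bound[OF xn, of t Z]] t f unfolding F_def PX_def PH_def e_def B2_def by linarith
  have F2: "PX \<le> sig\<^sup>2 * na2 + (sig\<^sup>2 - gam) * nb2"
    using decomp_facts(1)[OF a b n] gam_props(2)[OF b] unfolding PX_def na2_def nb2_def by linarith
  have F3: "2 * PH \<le> mu1 * na2 + 4 * B2 * nb"
    using decomp_facts(2)[OF a b n, of Z] mu1_hom[OF a] unfolding PH_def na2_def B2_def nb_def by linarith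
  have F3t: "2 * t * PH \<le> t * (mu1 * na2) + t * (4 * B2 * nb)"
  proof -
    have "t * (2 * PH) \<le> t * (mu1 * na2 + 4 * B2 * nb)" using F3 t by (intro mult_left_mono) auto
    then show ?thesis by (simp add: algebra_simps)
  qed
  have F4: "F \<ge> sig\<^sup>2 + t * mu1 - e" using f_lower[OF t, of Z] unfolding F_def e_def B2_def by simp
  have F5: "na2 = 1 - nb2" using n unfolding na2_def nb2_def by simp
  have F6: "t * (- (mu1 * nb2)) \<le> t * (2 * B2 * nb)"
  proof -
    have nb1: "nb \<le> 1" "0 \<le> nb" using decomp_facts(4)[OF a b n] unfolding nb_def by auto
    have "nb2 \<le> nb" unfolding nb2_def nb_def[symmetric] using nb1 by (simp add: power2_eq_square mult_left_le_one_le)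
    have "- (mu1 * nb2) \<le> \<bar>mu1\<bar> * nb2" using mult_right_mono[of "-mu1" "\<bar>mu1\<bar>" nb2] unfolding nb2_def by simp
    also have "\<dots> \<le> (2 * B2) * nb2" using mu1_le_B[of Z] unfolding B2_def nb2_def by (intro mult_right_mono) auto
    also have "\<dots> \<le> (2 * B2) * nb" using \<open>nb2 \<le> nb\<close> unfolding B2_def by (intro mult_left_mono) auto
    finally show ?thesis using t by (intro mult_left_mono) auto
  qed
  have main: "gam * nb2 \<le> 6 * B2 * t * nb + 2 * e"
  proof -
    have "sig\<^sup>2*na2 = sig\<^sup>2 - sig\<^sup>2*nb2" "t*(mu1*na2) = t*mu1 - t*(mu1*nb2)" by (simp_all add: F5 algebra_simps)
    moreover have "(sig\<^sup>2 - gam)*nb2 = sig\<^sup>2*nb2 - gam*nb2" "t*(-(mu1*nb2)) = - (t*(mu1*nb2))" "t*(4*B2*nb) = 4*(B2*t*nb)" "t*(2*B2*nb) = 2*(B2*t*nb)" "6*B2*t*nb = 6*(B2*t*nb)" by (simp_all add: algebra_simps)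
    ultimately show ?thesis using F1 F2 F3t F4 F6 by linarith
  qed
  have "gam * nb\<^sup>2 \<le> (6 * B2) * t * nb + (26 * B2) * t\<^sup>2"
    using main unfolding e_def nb2_def nb_def by (simp add: algebra_simps)
  then have "nb \<le> (1 + (6 * B2 + 26 * B2) / gam) * t"
    by (intro arith_b gam_props(1)) (use t in \<open>auto simp: B2_def nb_def\<close>)
  then show ?thesis unfolding KZ_def nb_def B2_def .
qed

lemma a_close:
  assumes a: "a \<in> E0" and b: "b \<in> Perp" and n: "(norm a)\<^sup>2 + (norm b)\<^sup>2 = 1"
    and f: "(spec_norm (Yt Z t))\<^sup>2 = (norm (Yt Z t *v (a + b)))\<^sup>2" and t: "0 < t" "t \<le> 1"
  shows "2 * ((P *v a) \<bullet> (H *v a)) \<ge> mu1 - (4 * (BZ Z)\<^sup>2 * KZ Z + 26 * (BZ Z)\<^sup>2) * t"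
proof -
  define B2 where "B2 = (BZ Z)\<^sup>2"
  define F where "F = (spec_norm (Yt Z t))\<^sup>2"
  define PX where "PX = (norm (P *v (a + b)))\<^sup>2"
  define PH where "PH = (P *v (a + b)) \<bullet> (H *v (a + b))"
  define PA where "PA = (P *v a) \<bullet> (H *v a)"
  define K where "K = KZ Z"
  define e where "e = 13 * B2 * t\<^sup>2"
  have xn: "norm (a + b) \<le> 1" using norm_ab_one[OF a b n] by simp
  have F1: "F \<le> PX + 2 * t * PH + e"
    using abs_le_D1[OF gen_bound[OF xn, of t Z]] t f unfolding F_def PX_def PH_def e_def B2_def by linarith
  have F2: "PX \<le> sig\<^sup>2"
  proof -
    have "(norm (P *v b))\<^sup>2 \<le> sig\<^sup>2 * (norm b)\<^sup>2" by (rule normP_sq_le)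
    moreover have "sig\<^sup>2 * (norm a)\<^sup>2 + sig\<^sup>2 * (norm b)\<^sup>2 = sig\<^sup>2" using n by (simp add: distrib_left[symmetric])
    ultimately show ?thesis using decomp_facts(1)[OF a b n] unfolding PX_def by linarith
  qed
  have nbK: "norm b \<le> K * t" using b_small[OF a b n f t] unfolding K_def .
  have F3: "2 * PH \<le> 2 * PA + 4 * B2 * (K * t)"
  proof -
    have "4 * B2 * norm b \<le> 4 * B2 * (K * t)" using nbK unfolding B2_def by (intro mult_left_mono) auto
    then show ?thesis using decomp_facts(2)[OF a b n, of Z] unfolding PH_def PA_def B2_def by linarith
  qed
  have F3t: "2 * t * PH \<le> t * (2 * PA) + (4 * B2 * K) * t\<^sup>2"
  proof -
    have "t * (2 * PH) \<le> t * (2 * PA + 4 * B2 * (K * t))" using F3 t by (intro mult_left_mono) auto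
    then show ?thesis by (simp add: algebra_simps power2_eq_square)
  qed
  have F4: "F \<ge> sig\<^sup>2 + t * mu1 - e" using f_lower[OF t, of Z] unfolding F_def e_def B2_def by simp
  have "t * mu1 \<le> t * (2 * PA) + (4 * B2 * K + 26 * B2) * t\<^sup>2"
  proof -
    have "(4 * B2 * K + 26 * B2) * t\<^sup>2 = (4 * B2 * K) * t\<^sup>2 + 2 * e" unfolding e_def by (simp add: algebra_simps)
    then show ?thesis using F1 F2 F3t F4 by linarith
  qed
  then have "t * mu1 \<le> t * (2 * PA + (4 * B2 * K + 26 * B2) * t)" by (simp add: algebra_simps power2_eq_square)
  then have "mu1 \<le> 2 * PA + (4 * B2 * K + 26 * B2) * t" using t by simp
  then show ?thesis unfolding PA_def B2_def K_def by linarith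
qed

end

context pPH
begin

definition "C3 Z = 10 * (BZ Z * (KZ Z + 1))\<^sup>2 + 2 * (BZ Z)\<^sup>2 * (KZ Z)\<^sup>2"

lemma Perp_scale: "b \<in> Perp \<Longrightarrow> c *\<^sub>R b \<in> Perp"
  using Perp_sub by (simp add: subspace_def)

lemma ratio_bound:
  assumes a: "a \<in> E0" and b: "b \<in> Perp" and n: "(norm a)\<^sup>2 + (norm b)\<^sup>2 = 1"
    and f: "(spec_norm (Yt Z t))\<^sup>2 = (norm (Yt Z t *v (a + b)))\<^sup>2" and t: "0 < t" "t \<le> 1"
  shows "ratio Z t \<le> GZ Z a ((1/t) *\<^sub>R b) + t * C3 Z"
proof -
  define \<beta> where "\<beta> = (1/t) *\<^sub>R b"
  define B where "B = BZ Z"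
  define K where "K = KZ Z"
  have B0: "0 < B" using BZ_ge by (simp add: B_def)
  have K1: "1 \<le> K" using KZ_ge by (simp add: K_def)
  have bP: "\<beta> \<in> Perp" unfolding \<beta>_def by (rule Perp_scale[OF b])
  have bt: "b = t *\<^sub>R \<beta>" using t by (simp add: \<beta>_def)
  have nbK: "norm b \<le> K * t" using b_small[OF a b n f t] unfolding K_def .
  have nbeta: "norm \<beta> \<le> K" using nbK t by (simp add: \<beta>_def field_simps)
  have na: "norm a \<le> 1" using decomp_facts(3)[OF a b n] .
  define v0 where "v0 = P *v a"
  define v1 where "v1 = P *v \<beta> + H *v a"
  define v2 where "v2 = H *v \<beta> + (1/2) *\<^sub>R (Z *v a)"
  define v3 where "v3 = (1/2) *\<^sub>R (Z *v \<beta>)"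
  define R where "R = rem4 v0 v1 v2 v3 t"
  define F where "F = (spec_norm (Yt Z t))\<^sup>2"
  define G where "G = GZ Z a \<beta>"
  define na2 where "na2 = (norm a)\<^sup>2"
  define b2 where "b2 = (norm \<beta>)\<^sup>2"
  define PA where "PA = (P *v a) \<bullet> (H *v a)"
  have exp: "F = sig\<^sup>2 * na2 + 2 * t * PA + t\<^sup>2 * (G + sig\<^sup>2 * b2) + t^3 * R"
  proof -
    have "F = (norm (v0 + t *\<^sub>R v1 + t\<^sup>2 *\<^sub>R v2 + t^3 *\<^sub>R v3))\<^sup>2"
      unfolding F_def f bt v0_def v1_def v2_def v3_def by (simp only: Yx_expand)
    also have "\<dots> = (norm v0)\<^sup>2 + 2*t*(v0 \<bullet> v1) + t\<^sup>2*((norm v1)\<^sup>2 + 2*(v0 \<bullet> v2)) + t^3 * R"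
      unfolding R_def by (rule poly4')
    also have "(norm v0)\<^sup>2 = sig\<^sup>2 * na2" unfolding v0_def na2_def by (rule E0_normP[OF a])
    also have "v0 \<bullet> v1 = PA" using EP_orth(2)[OF a bP] by (simp add: v0_def v1_def PA_def inner_add_right)
    also have "(norm v1)\<^sup>2 + 2*(v0 \<bullet> v2) = G + sig\<^sup>2 * b2" using GZ_alt[of \<beta> a Z] by (simp add: v0_def v1_def v2_def G_def b2_def)
    finally show ?thesis .
  qed
  have nbt: "(norm b)\<^sup>2 = t\<^sup>2 * b2" unfolding bt b2_def using t by (simp add: power_mult_distrib)
  have na2e: "na2 = 1 - t\<^sup>2 * b2" using n nbt unfolding na2_def by linarith
  have PAle: "2 * PA \<le> mu1 * na2" using mu1_hom[OF a] unfolding PA_def na2_def .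
  have PAt: "2 * t * PA \<le> t * mu1 - t^3 * (mu1 * b2)"
  proof -
    have "t * (2 * PA) \<le> t * (mu1 * na2)" using PAle t by (intro mult_left_mono) auto
    then show ?thesis unfolding na2e by (simp add: algebra_simps power2_eq_square power3_eq_cube)
  qed
  have Rb: "R \<le> 10 * (B * (K + 1))\<^sup>2"
  proof -
    have BK: "0 \<le> B * K" using B0 K1 by simp
    have nv0: "norm v0 \<le> B * (K + 1)"
    proof -
      have "norm v0 \<le> B * norm a" unfolding v0_def B_def by (rule mvB(1))
      also have "\<dots> \<le> B * 1" using na B0 by (intro mult_left_mono) auto
      finally show ?thesis using BK by (simp add: algebra_simps)
    qed
    have nPb: "norm (P *v \<beta>) \<le> B * K" using mvB(1)[where x=\<beta> and Z=Z] nbeta B0 unfolding B_def by (meson mult_left_mono order_trans less_imp_le)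
    have nHb: "norm (H *v \<beta>) \<le> B * K" using mvB(2)[where x=\<beta> and Z=Z] nbeta B0 unfolding B_def by (meson mult_left_mono order_trans less_imp_le)
    have nZb: "norm (Z *v \<beta>) \<le> B * K" using mvB(3)[where x=\<beta> and Z=Z] nbeta B0 unfolding B_def by (meson mult_left_mono order_trans less_imp_le)
    have nHa: "norm (H *v a) \<le> B" using mvB(2)[where x=a and Z=Z] na B0 unfolding B_def by (meson mult_left_le_one_le norm_ge_zero order_trans less_imp_le mult_right_le_one_le)
    have nZa: "norm (Z *v a) \<le> B" using mvB(3)[where x=a and Z=Z] na B0 unfolding B_def by (meson mult_left_le_one_le norm_ge_zero order_trans less_imp_le mult_right_le_one_le)
    have nv1: "norm v1 \<le> B * (K + 1)"
      using norm_triangle_ineq[of "P *v \<beta>" "H *v a"] nPb nHa unfolding v1_def by (simp add: algebra_simps)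
    have nv2: "norm v2 \<le> B * (K + 1)"
      using norm_triangle_ineq[of "H *v \<beta>" "(1/2) *\<^sub>R (Z *v a)"] nHb nZa B0 unfolding v2_def by (simp add: algebra_simps)
    have nv3: "norm v3 \<le> B * (K + 1)" using nZb B0 BK unfolding v3_def by (simp add: algebra_simps)
    have "\<bar>R\<bar> \<le> 10 * (B * (K + 1))\<^sup>2" unfolding R_def
      by (rule rem4_bound) (use nv0 nv1 nv2 nv3 t in auto)
    then show ?thesis by simp
  qed
  have mub: "- (mu1 * b2) \<le> 2 * B\<^sup>2 * K\<^sup>2"
  proof -
    have b2K: "b2 \<le> K\<^sup>2" unfolding b2_def using nbeta by (intro power_mono) auto
    have "- (mu1 * b2) \<le> \<bar>mu1\<bar> * b2" using mult_right_mono[of "-mu1" "\<bar>mu1\<bar>" b2] unfolding b2_def by simp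
    also have "\<dots> \<le> (2 * B\<^sup>2) * K\<^sup>2" using mu1_le_B[of Z] b2K unfolding B_def b2_def
      by (intro mult_mono) auto
    finally show ?thesis by simp
  qed
  have "R - mu1 * b2 \<le> C3 Z" using Rb mub unfolding C3_def B_def[symmetric] K_def[symmetric] by linarith
  then have t3: "t^3 * (R - mu1 * b2) \<le> t^3 * C3 Z" using t by (intro mult_left_mono) auto
  have "F - sig\<^sup>2 - t * mu1 \<le> t\<^sup>2 * G + t^3 * C3 Z"
  proof -
    have "sig\<^sup>2 * na2 = sig\<^sup>2 - t\<^sup>2 * (sig\<^sup>2 * b2)" unfolding na2e by (simp add: algebra_simps)
    moreover have "t\<^sup>2 * (G + sig\<^sup>2 * b2) = t\<^sup>2 * G + t\<^sup>2 * (sig\<^sup>2 * b2)" by (simp add: algebra_simps)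
    moreover have "t^3 * (R - mu1 * b2) = t^3 * R - t^3 * (mu1 * b2)" by (simp add: algebra_simps)
    ultimately show ?thesis using exp PAt t3 by linarith
  qed
  then have "(F - sig\<^sup>2 - t * mu1) / t\<^sup>2 \<le> (t\<^sup>2 * G + t^3 * C3 Z) / t\<^sup>2"
    using t by (intro divide_right_mono) auto
  also have "\<dots> = G + t * C3 Z" using t by (simp add: field_simps power2_eq_square power3_eq_cube)
  finally show ?thesis unfolding ratio_def F_def G_def \<beta>_def .
qed

lemma ratio_upper:
  assumes u: "u > nu Z"
  shows "eventually (\<lambda>t. ratio Z t < u) (at_right 0)"
proof -
  define e where "e = (u - nu Z) / 2"
  have e0: "e > 0" using u by (simp add: e_def)
  define K where "K = KZ Z"
  have K1: "1 \<le> K" using KZ_ge by (simp add: K_def)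
  define K2 where "K2 = 4 * (BZ Z)\<^sup>2 * KZ Z + 26 * (BZ Z)\<^sup>2"
  have K20: "0 \<le> K2" unfolding K2_def using KZ_ge[of Z] by simp
  define C where "C = C3 Z"
  have C0: "0 \<le> C" unfolding C_def C3_def by simp
  obtain d where d0: "d > 0" and dU: "\<forall>a \<beta>. a \<in> E0 \<longrightarrow> norm a \<le> 1 \<longrightarrow> (norm a)\<^sup>2 \<ge> 1 - d \<longrightarrow> 2 * ((P *v a) \<bullet> (H *v a)) \<ge> mu1 - d
          \<longrightarrow> \<beta> \<in> Perp \<longrightarrow> norm \<beta> \<le> K \<longrightarrow> GZ Z a \<beta> \<le> nu Z + e"
    using lemma_U[OF e0, of K Z] K1 by auto
  define t0 where "t0 = min 1 (min (d / (K\<^sup>2 + 1)) (min (d / (K2 + 1)) (e / (C + 1))))"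
  have t00: "t0 > 0" unfolding t0_def using d0 e0 K20 C0 by (simp add: add_nonneg_pos)
  have "eventually (\<lambda>t. t < t0) (at_right (0::real))"
    using t00 eventually_at_right_field by blast
  moreover have "eventually (\<lambda>t. t > 0) (at_right (0::real))" by (simp add: eventually_at_right_less)
  ultimately show ?thesis
  proof eventually_elim
    case (elim t)
    have t: "0 < t" "t \<le> 1" using elim t0_def by auto
    have tK: "t \<le> d / (K\<^sup>2 + 1)" and tK2: "t \<le> d / (K2 + 1)" and tC: "t < e / (C + 1)"
      using elim unfolding t0_def by auto
    obtain a b where a: "a \<in> E0" and b: "b \<in> Perp" and n: "(norm a)\<^sup>2 + (norm b)\<^sup>2 = 1"
      and f: "(spec_norm (Yt Z t))\<^sup>2 = (norm (Yt Z t *v (a + b)))\<^sup>2" by (rule upper_decomp)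
    have nbK: "norm b \<le> K * t" using b_small[OF a b n f t] unfolding K_def .
    have ac: "2 * ((P *v a) \<bullet> (H *v a)) \<ge> mu1 - K2 * t" using a_close[OF a b n f t] unfolding K2_def .
    have "K2 * t \<le> d"
    proof -
      have "K2 * t \<le> (K2 + 1) * t" using t by (simp add: algebra_simps)
      also have "\<dots> \<le> (K2 + 1) * (d / (K2 + 1))" using tK2 K20 by (intro mult_left_mono) auto
      also have "\<dots> = d" using K20 by simp
      finally show ?thesis .
    qed
    then have c1: "2 * ((P *v a) \<bullet> (H *v a)) \<ge> mu1 - d" using ac by linarith
    have "(norm b)\<^sup>2 \<le> d"
    proof -
      have "(norm b)\<^sup>2 \<le> (K * t)\<^sup>2" using nbK by (intro power_mono) auto
      also have "\<dots> = K\<^sup>2 * (t * t)" by (simp add: power2_eq_square)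
      also have "\<dots> \<le> K\<^sup>2 * (t * 1)" using t by (intro mult_left_mono) auto
      also have "\<dots> \<le> (K\<^sup>2 + 1) * t" using t by (simp add: algebra_simps)
      also have "\<dots> \<le> (K\<^sup>2 + 1) * (d / (K\<^sup>2 + 1))" using tK by (intro mult_left_mono) (auto simp: add_nonneg_pos)
      also have "\<dots> = d"
      proof -
        have "0 \<le> K\<^sup>2" by simp
        then have "0 < K\<^sup>2 + 1" by linarith
        then have "K\<^sup>2 + 1 \<noteq> 0" by auto
        then show ?thesis by simp
      qed
      finally show ?thesis .
    qed
    then have c2: "(norm a)\<^sup>2 \<ge> 1 - d" using n by linarith
    have c3: "norm a \<le> 1" using decomp_facts(3)[OF a b n] .
    have bP: "(1/t) *\<^sub>R b \<in> Perp" by (rule Perp_scale[OF b])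
    have c4: "norm ((1/t) *\<^sub>R b) \<le> K" using nbK t by (simp add: field_simps)
    have G: "GZ Z a ((1/t) *\<^sub>R b) \<le> nu Z + e" using dU a c3 c2 c1 bP c4 by blast
    have "t * C < e"
    proof -
      have "t * C \<le> t * (C + 1)" using t by simp
      also have "\<dots> < (e / (C + 1)) * (C + 1)" using tC C0 by (intro mult_strict_right_mono) auto
      also have "\<dots> = e" using C0 by simp
      finally show ?thesis .
    qed
    moreover have "nu Z + e + e = u" by (simp add: e_def field_simps)
    ultimately show ?case using ratio_bound[OF a b n f t] G unfolding C_def by linarith
  qed
qed

lemma ratio_tendsto: "((\<lambda>t. ratio Z t) \<longlongrightarrow> nu Z) (at_right 0)"
proof (rule order_tendstoI)
  fix l assume "l < nu Z"
  then show "eventually (\<lambda>t. l < ratio Z t) (at_right 0)"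
    using ratio_lower[of "nu Z - l" Z] by simp
next
  fix u assume "u > nu Z"
  then show "eventually (\<lambda>t. ratio Z t < u) (at_right 0)" by (rule ratio_upper)
qed

end

lemma sn_tendsto: "(f \<longlongrightarrow> A) F \<Longrightarrow> ((\<lambda>x. spec_norm (f x :: real^'n^'m)) \<longlongrightarrow> spec_norm A) F"
  using continuous_on_tendsto_compose[OF sn_continuous[of UNIV], of f A F] by simp

context pPH
begin

lemma Yt_tendsto: "((\<lambda>t. Yt Z t) \<longlongrightarrow> P) (at_right 0)"
proof -
  have "((\<lambda>t. P + t *\<^sub>R H + (t\<^sup>2 / 2) *\<^sub>R Z) \<longlongrightarrow> P + 0 *\<^sub>R H + (0\<^sup>2 / 2) *\<^sub>R Z) (at_right 0)"
    by (intro tendsto_intros) auto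
  then show ?thesis unfolding Yt_def by simp
qed

lemma s_tendsto: "((\<lambda>t. spec_norm (Yt Z t)) \<longlongrightarrow> sig) (at_right 0)"
  unfolding sig_def by (rule sn_tendsto[OF Yt_tendsto])

lemma second_tendsto:
  "((\<lambda>t. (spec_norm (Yt Z t) - sig - t * (mu1 / (2 * sig))) / (t\<^sup>2 / 2)) \<longlongrightarrow> nu Z / sig - mu1\<^sup>2 / (4 * sig^3)) (at_right 0)"
proof -
  define s where "s t = spec_norm (Yt Z t)" for t
  define r where "r t = ratio Z t" for t
  have sig0: "sig > 0" by (rule sig_pos)
  have eq: "(s t - sig - t * (mu1 / (2 * sig))) / (t\<^sup>2 / 2) = (- mu1 * (mu1 + t * r t) / (s t + sig) + 2 * sig * r t) / (sig * (s t + sig))"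
    if t: "t > 0" for t
  proof -
    have s0: "s t \<ge> 0" unfolding s_def by (rule sn_nonneg)
    have sp: "s t + sig > 0" using s0 sig0 by linarith
    have rr: "r t = ((s t)\<^sup>2 - sig\<^sup>2 - t * mu1) / t\<^sup>2" unfolding r_def ratio_def s_def by simp
    define S where "S = s t"
    have tn: "t \<noteq> 0" using t by simp
    have sn: "S + sig \<noteq> 0" using sp by (simp add: S_def)
    have signz: "sig \<noteq> 0" using sig0 by simp
    have q: "mu1 + t * r t = (S - sig) * (S + sig) / t"
      unfolding rr S_def[symmetric] using tn by (simp add: field_simps power2_eq_square)
    have qx: "(S - sig) * (S + sig) / t = ((S - sig) / t) * (S + sig)" by simp
    have q2: "- mu1 * (mu1 + t * r t) / (S + sig) = - mu1 * (S - sig) / t"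
    proof -
      have "- mu1 * (mu1 + t * r t) / (S + sig) = (- mu1 * ((S - sig) / t)) * (S + sig) / (S + sig)"
        unfolding q qx by (simp add: mult.assoc)
      also have "\<dots> = - mu1 * ((S - sig) / t)" using sn by simp
      finally show ?thesis by simp
    qed
    have rhs: "(- mu1 * (mu1 + t * r t) / (S + sig) + 2 * sig * r t) / (sig * (S + sig))
       = (- mu1 * t * (S - sig) + 2 * sig * (S\<^sup>2 - sig\<^sup>2 - t * mu1)) / (t\<^sup>2 * (sig * (S + sig)))"
    proof -
      have r2: "2 * sig * r t = 2 * sig * (S\<^sup>2 - sig\<^sup>2 - t * mu1) / t\<^sup>2" unfolding rr S_def by simp
      have "(- mu1 * (mu1 + t * r t) / (S + sig) + 2 * sig * r t) / (sig * (S + sig))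
        = (- mu1 * (S - sig) / t + 2 * sig * (S\<^sup>2 - sig\<^sup>2 - t * mu1) / t\<^sup>2) / (sig * (S + sig))"
        by (simp only: q2 r2)
      also have "\<dots> = ((- mu1 * t * (S - sig) + 2 * sig * (S\<^sup>2 - sig\<^sup>2 - t * mu1)) / t\<^sup>2) / (sig * (S + sig))"
      proof -
        have "(- mu1 * t * (S - sig) + 2 * sig * (S\<^sup>2 - sig\<^sup>2 - t * mu1)) / t\<^sup>2
            = (- mu1 * t * (S - sig)) / t\<^sup>2 + 2 * sig * (S\<^sup>2 - sig\<^sup>2 - t * mu1) / t\<^sup>2"
          by (rule add_divide_distrib)
        also have "(- mu1 * t * (S - sig)) / t\<^sup>2 = - mu1 * (S - sig) / t"
          using tn by (simp add: power2_eq_square)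
        finally show ?thesis by simp
      qed
      also have "\<dots> = (- mu1 * t * (S - sig) + 2 * sig * (S\<^sup>2 - sig\<^sup>2 - t * mu1)) / (t\<^sup>2 * (sig * (S + sig)))"
        by (simp add: divide_divide_eq_left)
      finally show ?thesis .
    qed
    have lhs: "(S - sig - t * (mu1 / (2 * sig))) / (t\<^sup>2 / 2) = (2 * sig * (S - sig) - t * mu1) / (sig * t\<^sup>2)"
      using tn signz by (simp add: field_simps power2_eq_square)
    have poly: "(2 * sig * (S - sig) - t * mu1) * (S + sig) = - mu1 * t * (S - sig) + 2 * sig * (S\<^sup>2 - sig\<^sup>2 - t * mu1)"
      by (simp add: algebra_simps power2_eq_square)
    have dd: "t\<^sup>2 * (sig * (S + sig)) = (sig * t\<^sup>2) * (S + sig)" by (simp add: algebra_simps)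
    have "(2 * sig * (S - sig) - t * mu1) / (sig * t\<^sup>2) = ((2 * sig * (S - sig) - t * mu1) * (S + sig)) / (t\<^sup>2 * (sig * (S + sig)))"
      unfolding dd using sn by simp
    then show ?thesis unfolding S_def[symmetric] lhs rhs poly by simp
  qed
  have lim: "((\<lambda>t. (- mu1 * (mu1 + t * r t) / (s t + sig) + 2 * sig * r t) / (sig * (s t + sig)))
      \<longlongrightarrow> (- mu1 * (mu1 + 0 * nu Z) / (sig + sig) + 2 * sig * nu Z) / (sig * (sig + sig))) (at_right 0)"
    using sig0 unfolding r_def s_def
    by (intro tendsto_intros ratio_tendsto s_tendsto) auto
  have val: "(- mu1 * (mu1 + 0 * nu Z) / (sig + sig) + 2 * sig * nu Z) / (sig * (sig + sig)) = nu Z / sig - mu1\<^sup>2 / (4 * sig^3)"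
    using sig0 by (simp add: field_simps power2_eq_square power3_eq_cube)
  have ev: "eventually (\<lambda>t. t > 0) (at_right (0::real))" by (simp add: eventually_at_right_less)
  show ?thesis
    using lim unfolding val s_def[symmetric]
    by (rule Lim_transform_eventually) (use ev eq in \<open>auto elim: eventually_mono\<close>)
qed

lemma first_tendsto:
  "((\<lambda>t. (spec_norm (P + t *\<^sub>R H) - spec_norm P) / t) \<longlongrightarrow> mu1 / (2 * sig)) (at_right 0)"
proof -
  define s where "s t = spec_norm (Yt 0 t)" for t
  define r where "r t = ratio 0 t" for t
  have sig0: "sig > 0" by (rule sig_pos)
  have Y0: "Yt 0 t = P + t *\<^sub>R H" for t unfolding Yt_def by simp
  have eq: "(spec_norm (P + t *\<^sub>R H) - spec_norm P) / t = (mu1 + t * r t) / (s t + sig)"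
    if t: "t > 0" for t
  proof -
    have s0: "s t \<ge> 0" unfolding s_def by (rule sn_nonneg)
    have sp: "s t + sig > 0" using s0 sig0 by linarith
    have rr: "r t = ((s t)\<^sup>2 - sig\<^sup>2 - t * mu1) / t\<^sup>2" unfolding r_def ratio_def s_def by simp
    define S where "S = s t"
    have tn: "t \<noteq> 0" using t by simp
    have sn: "S + sig \<noteq> 0" using sp by (simp add: S_def)
    have q: "mu1 + t * r t = (S - sig) * (S + sig) / t"
      unfolding rr S_def[symmetric] using tn by (simp add: field_simps power2_eq_square)
    have qx: "(S - sig) * (S + sig) / t = ((S - sig) / t) * (S + sig)" by simp
    have "(mu1 + t * r t) / (S + sig) = (S - sig) / t" unfolding q qx using sn by simp
    moreover have "spec_norm (P + t *\<^sub>R H) = S" unfolding S_def s_def Y0 ..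
    ultimately show ?thesis unfolding S_def sig_def by simp
  qed
  have lim: "((\<lambda>t. (mu1 + t * r t) / (s t + sig)) \<longlongrightarrow> (mu1 + 0 * nu 0) / (sig + sig)) (at_right 0)"
    using sig0 unfolding r_def s_def
    by (intro tendsto_intros ratio_tendsto s_tendsto) auto
  have val: "(mu1 + 0 * nu 0) / (sig + sig) = mu1 / (2 * sig)" by simp
  have ev: "eventually (\<lambda>t. t > 0) (at_right (0::real))" by (simp add: eventually_at_right_less)
  show ?thesis
    using lim unfolding val
    by (rule Lim_transform_eventually) (use ev eq in \<open>auto elim: eventually_mono\<close>)
qed

lemma dir_deriv_eq: "dir_deriv spec_norm P H = mu1 / (2 * sig)"
  unfolding dir_deriv_def by (rule tendsto_Lim[OF trivial_limit_at_right_real first_tendsto])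

lemma second_eq: "second_dir_deriv spec_norm P H Z = nu Z / sig - mu1\<^sup>2 / (4 * sig^3)"
  unfolding second_dir_deriv_def dir_deriv_eq
  by (rule tendsto_Lim[OF trivial_limit_at_right_real]) (use second_tendsto[of Z] in \<open>simp add: Yt_def sig_def\<close>)

lemma second_tendsto':
  "((\<lambda>t. (spec_norm (P + t *\<^sub>R H + (t\<^sup>2 / 2) *\<^sub>R Z) - spec_norm P - t * dir_deriv spec_norm P H) / (t\<^sup>2 / 2))
     \<longlongrightarrow> second_dir_deriv spec_norm P H Z) (at_right 0)"
  unfolding second_eq dir_deriv_eq using second_tendsto[of Z] by (simp add: Yt_def sig_def)

end

lemma alg1:
  fixes t s d b N p c R w :: real
  assumes t: "t > 0" and s: "s > 0" and d: "d = 1 + t\<^sup>2 * b" "d > 0"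
    and N: "N = s\<^sup>2 + 2 * t * p + t\<^sup>2 * c + t^3 * R"
  shows "((N / d - s\<^sup>2) / s - 2 * t * w) / t\<^sup>2
       = 2 * (p / s - w) / (t * d) + (c - s\<^sup>2 * b) / (s * d) + t * (R - 2 * s * b * w) / (s * d)"
proof -
  have dn: "d \<noteq> 0" using d by simp
  have tn: "t \<noteq> 0" using t by simp
  have sn: "s \<noteq> 0" using s by simp
  have q: "N - s\<^sup>2 * d - 2 * t * w * s * d = 2 * t * (p - s * w) + t\<^sup>2 * (c - s\<^sup>2 * b) + t ^ 3 * (R - 2 * s * b * w)"
    unfolding N d(1) by (simp add: algebra_simps power2_eq_square power3_eq_cube)
  have r: "2 * (p / s - w) / (t * d) + (c - s\<^sup>2 * b) / (s * d) + t * (R - 2 * s * b * w) / (s * d)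
      = (2 * t * (p - s * w) + t\<^sup>2 * (c - s\<^sup>2 * b) + t ^ 3 * (R - 2 * s * b * w)) / (t\<^sup>2 * (s * d))"
    using tn sn dn by (simp add: field_simps power2_eq_square power3_eq_cube)
  have "((N / d - s\<^sup>2) / s - 2 * t * w) / t\<^sup>2 = (N - s\<^sup>2 * d - 2 * t * w * s * d) / (t\<^sup>2 * (s * d))"
    using tn sn dn by (simp add: field_simps)
  also have "\<dots> = 2 * (p / s - w) / (t * d) + (c - s\<^sup>2 * b) / (s * d) + t * (R - 2 * s * b * w) / (s * d)"
    unfolding q r ..
  finally show ?thesis .
qed

lemma alg2:
  fixes th s t w Phi :: real
  assumes s: "s > 0" and t: "t > 0" and ph: "th\<^sup>2 \<ge> Phi"
  shows "2 * (th - s - t * w) / t\<^sup>2 \<ge> ((Phi - s\<^sup>2) / s - 2 * t * w) / t\<^sup>2 - (th - s)\<^sup>2 / (s * t\<^sup>2)"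
proof -
  have e: "2 * (th - s - t * w) / t\<^sup>2 = ((th\<^sup>2 - s\<^sup>2) / s - 2 * t * w) / t\<^sup>2 - (th - s)\<^sup>2 / (s * t\<^sup>2)"
    using s t by (simp add: field_simps power2_eq_square)
  have "(Phi - s\<^sup>2) / s \<le> (th\<^sup>2 - s\<^sup>2) / s" using ph s by (intro divide_right_mono) auto
  then have "((Phi - s\<^sup>2) / s - 2 * t * w) / t\<^sup>2 \<le> ((th\<^sup>2 - s\<^sup>2) / s - 2 * t * w) / t\<^sup>2"
    using t by (intro divide_right_mono) auto
  then show ?thesis unfolding e by linarith
qed


lemma abs3: "\<bar>(a::real) + b + c\<bar> \<le> \<bar>a\<bar> + \<bar>b\<bar> + \<bar>c\<bar>"
  by (metis abs_triangle_ineq add_right_mono order_trans)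

lemma mv_norm_le: "norm x \<le> r \<Longrightarrow> spec_norm A \<le> B \<Longrightarrow> 0 \<le> r \<Longrightarrow> norm (A *v x) \<le> B * r"
proof -
  assume a: "norm x \<le> r" "spec_norm A \<le> B" "0 \<le> r"
  have "norm (A *v x) \<le> spec_norm A * norm x" by (rule sn_bound)
  also have "\<dots> \<le> B * r" using a sn_nonneg[of A] by (intro mult_mono) auto
  finally show ?thesis .
qed

context pPH
begin

definition "BB = sig + BH + 1"
definition "EU = 4 * Rb\<^sup>2 + 4 * BB * (Rb + 1) / sig + 4 * BB\<^sup>2 * (Rb + 1)\<^sup>2 * Rb\<^sup>2 / sig + (10 * (BB * (Rb + 1))\<^sup>2 + 2 * sig * Rb\<^sup>2 * BB) / sig"

lemma F2_point:
  assumes W: "\<And>X. W \<bullet> X \<le> spec_norm X" and wH: "W \<bullet> H = mu1 / (2 * sig)"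
    and t: "0 < t" "t \<le> 1" and hb: "spec_norm (h - H) \<le> 1"
    and a: "a \<in> A1" and b: "\<beta> \<in> Perp" and nb: "norm \<beta> \<le> Rb"
  shows "GZ 0 a \<beta> / sig + 2 * ((P *v a) \<bullet> (h *v a) / sig - W \<bullet> h) / t
    \<le> (((norm ((P + t *\<^sub>R h) *v (a + t *\<^sub>R \<beta>)))\<^sup>2 / (1 + t\<^sup>2 * (norm \<beta>)\<^sup>2) - sig\<^sup>2) / sig - 2 * t * (W \<bullet> h)) / t\<^sup>2
      + EU * (spec_norm (h - H) + t)"
proof -
  have aE: "a \<in> E0" and an: "norm a = 1" and am: "2 * ((P *v a) \<bullet> (H *v a)) = mu1" using A1_props[OF a] by auto
  have s0: "sig > 0" by (rule sig_pos)
  define B where "B = BB"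
  define e where "e = spec_norm (h - H)"
  have e0: "0 \<le> e" unfolding e_def by (rule sn_nonneg)
  have Rb0: "0 \<le> Rb" by (rule Rb_nonneg)
  have sB: "sig \<le> B" and HB: "spec_norm H \<le> B" and B1: "1 \<le> B" unfolding B_def BB_def BH_def using BH_nonneg sig_pos by (auto simp: BH_def)
  have hB: "spec_norm h \<le> B"
  proof -
    have "spec_norm h \<le> spec_norm H + spec_norm (h - H)" using sn_triangle[of H "h - H"] by simp
    then show ?thesis using hb sig_pos unfolding B_def BB_def BH_def by linarith
  qed
  have PB: "spec_norm P \<le> B" using sB by (simp add: sig_def)
  have Wabs: "\<bar>W \<bullet> X\<bar> \<le> spec_norm X" for X
    using W[of X] W[of "- X"] sn_uminus[of X] by (simp add: abs_le_iff)
  have nPa: "norm (P *v a) \<le> B" using mv_norm_le[of a 1 P B] an PB by simp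
  have nHa: "norm (H *v a) \<le> B" using mv_norm_le[of a 1 H B] an HB by simp
  have nha: "norm (h *v a) \<le> B" using mv_norm_le[of a 1 h B] an hB by simp
  have nPb: "norm (P *v \<beta>) \<le> B * Rb" using mv_norm_le[OF nb PB Rb0] .
  have nHb: "norm (H *v \<beta>) \<le> B * Rb" using mv_norm_le[OF nb HB Rb0] .
  have nhb: "norm (h *v \<beta>) \<le> B * Rb" using mv_norm_le[OF nb hB Rb0] .
  have ndb: "norm ((h - H) *v \<beta>) \<le> e * Rb" using mv_norm_le[OF nb _ Rb0, of "h - H" e] by (simp add: e_def)
  have nda: "norm ((h - H) *v a) \<le> e" using mv_norm_le[of a 1 "h - H" e] an by (simp add: e_def)
  define v1 where "v1 = P *v \<beta> + h *v a"
  define u1 where "u1 = P *v \<beta> + H *v a"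
  define c2h where "c2h = (norm v1)\<^sup>2 + 2 * ((P *v a) \<bullet> (h *v \<beta>))"
  define c2H where "c2H = (norm u1)\<^sup>2 + 2 * ((P *v a) \<bullet> (H *v \<beta>))"
  define Rh where "Rh = rem4 (P *v a) v1 (h *v \<beta>) 0 t"
  define N where "N = (norm ((P + t *\<^sub>R h) *v (a + t *\<^sub>R \<beta>)))\<^sup>2"
  define b2 where "b2 = (norm \<beta>)\<^sup>2"
  define d where "d = 1 + t\<^sup>2 * b2"
  define w where "w = W \<bullet> h"
  define p where "p = (P *v a) \<bullet> (h *v a)"
  define k where "k = p / sig - w"
  have d1: "d \<ge> 1" unfolding d_def b2_def by simp
  have d0: "d > 0" using d1 by simp
  have b2R: "b2 \<le> Rb\<^sup>2" unfolding b2_def using nb by (intro power_mono) auto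
  have b20: "0 \<le> b2" unfolding b2_def by simp
  have Nexp: "N = sig\<^sup>2 + 2 * t * p + t\<^sup>2 * c2h + t^3 * Rh"
  proof -
    have "(P + t *\<^sub>R h) *v (a + t *\<^sub>R \<beta>) = P *v a + t *\<^sub>R v1 + t\<^sup>2 *\<^sub>R (h *v \<beta>) + t^3 *\<^sub>R 0"
      unfolding v1_def by (simp add: mv_simps algebra_simps power2_eq_square)
    then have "N = (norm (P *v a))\<^sup>2 + 2 * t * ((P *v a) \<bullet> v1) + t\<^sup>2 * ((norm v1)\<^sup>2 + 2 * ((P *v a) \<bullet> (h *v \<beta>))) + t^3 * Rh"
      unfolding N_def Rh_def by (simp only: poly4')
    moreover have "(norm (P *v a))\<^sup>2 = sig\<^sup>2" using E0_normP[OF aE] an by simp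
    moreover have "(P *v a) \<bullet> v1 = p" using EP_orth(2)[OF aE b] unfolding v1_def p_def by (simp add: inner_add_right)
    ultimately show ?thesis unfolding c2h_def by simp
  qed
  have main: "((N / d - sig\<^sup>2) / sig - 2 * t * w) / t\<^sup>2
      = 2 * (p / sig - w) / (t * d) + (c2h - sig\<^sup>2 * b2) / (sig * d) + t * (Rh - 2 * sig * b2 * w) / (sig * d)"
    by (rule alg1[OF t(1) s0 d_def d0 Nexp])
  have GZ0: "GZ 0 a \<beta> = c2H - sig\<^sup>2 * b2"
    using GZ_alt[of \<beta> a 0] unfolding c2H_def u1_def b2_def by (simp add: mv_zero_r)
  have kabs: "\<bar>k\<bar> \<le> 2 * e"
  proof -
    have kk: "k = ((P *v a) \<bullet> ((h - H) *v a)) / sig - W \<bullet> (h - H)"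
    proof -
      have "(P *v a) \<bullet> (H *v a) / sig = W \<bullet> H" using am wH s0 by (simp add: field_simps)
      then show ?thesis unfolding k_def p_def w_def by (simp add: mv_simps inner_diff_right diff_divide_distrib inner_diff_left)
    qed
    have "\<bar>(P *v a) \<bullet> ((h - H) *v a)\<bar> \<le> sig * e"
    proof -
      have "\<bar>(P *v a) \<bullet> ((h - H) *v a)\<bar> \<le> norm (P *v a) * norm ((h - H) *v a)" by (rule Cauchy_Schwarz_ineq2)
      also have "\<dots> \<le> sig * e" using nda normP_le[of a] an e0 s0 by (intro mult_mono) auto
      finally show ?thesis .
    qed
    then have f1: "\<bar>(P *v a) \<bullet> ((h - H) *v a) / sig\<bar> \<le> e" using s0 by (simp add: abs_div divide_le_eq mult.commute)
    have f2: "\<bar>W \<bullet> (h - H)\<bar> \<le> e" using Wabs[of "h - H"] by (simp add: e_def)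
    show ?thesis unfolding kk abs_le_iff
      using abs_le_D1[OF f1] abs_le_D2[OF f1] abs_le_D1[OF f2] abs_le_D2[OF f2] by (intro conjI) linarith+
  qed
  have T1: "\<bar>2 * k / (t * d) - 2 * k / t\<bar> \<le> 4 * Rb\<^sup>2 * e"
  proof -
    have tn: "t \<noteq> 0" using t by simp
    have dn: "d \<noteq> 0" using d0 by simp
    have e1: "2 * k / (t * d) - 2 * k / t = (2 * k * (1 - d)) / (t * d)" using tn dn by (simp add: field_simps)
    have e2: "1 - d = - (t * (t * b2))" unfolding d_def by (simp add: power2_eq_square)
    have e3: "(2 * k * (- (t * (t * b2)))) / (t * d) = (t * (- (2 * k * t * b2))) / (t * d)" by (simp add: algebra_simps)
    have e4: "(t * (- (2 * k * t * b2))) / (t * d) = - (2 * k * t * b2 / d)" using tn by simp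
    have eq: "2 * k / (t * d) - 2 * k / t = - (2 * k * t * b2 / d)" unfolding e1 e2 e3 e4 ..
    have "\<bar>2 * k * t * b2 / d\<bar> = \<bar>2 * k * t * b2\<bar> / d" using d0 by (simp add: abs_div)
    also have "\<dots> \<le> \<bar>2 * k * t * b2\<bar> / 1" using d1 by (intro divide_left_mono) auto
    finally have "\<bar>2 * k * t * b2 / d\<bar> \<le> \<bar>2 * k * t * b2\<bar>" by simp
    also have "\<dots> = 2 * \<bar>k\<bar> * t * b2" using t b20 by (simp add: abs_mult)
    also have "\<dots> \<le> 2 * (2 * e) * 1 * Rb\<^sup>2" using kabs t b2R b20 e0
      by (intro mult_mono) auto
    also have "\<dots> = 4 * Rb\<^sup>2 * e" by simp
    finally have "\<bar>2 * k * t * b2 / d\<bar> \<le> 4 * Rb\<^sup>2 * e" .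
    then show ?thesis unfolding eq by (simp only: abs_minus_cancel)
  qed
  have c2diff: "\<bar>c2h - c2H\<bar> \<le> 4 * B * (Rb + 1) * e"
  proof -
    have v1u1: "v1 - u1 = (h - H) *v a" unfolding v1_def u1_def by (simp add: mv_simps)
    have "(norm v1)\<^sup>2 - (norm u1)\<^sup>2 = (v1 - u1) \<bullet> (v1 + u1)"
      by (simp add: power2_norm_eq_inner inner_diff_left inner_add_right inner_diff_right inner_commute[of u1 v1])
    moreover have "norm (v1 + u1) \<le> 2 * B * (Rb + 1)"
    proof -
      have "norm (v1 + u1) \<le> norm (P *v \<beta>) + norm (h *v a) + norm (P *v \<beta>) + norm (H *v a)"
        unfolding v1_def u1_def by (metis (no_types, lifting) add.assoc norm_triangle_le norm_triangle_ineq add_mono order_refl)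
      then show ?thesis using nPb nha nHa by (simp add: algebra_simps)
    qed
    ultimately have q1: "\<bar>(norm v1)\<^sup>2 - (norm u1)\<^sup>2\<bar> \<le> e * (2 * B * (Rb + 1))"
      using Cauchy_Schwarz_ineq2[of "v1 - u1" "v1 + u1"] v1u1 nda e0
      by (metis (no_types, lifting) mult_mono norm_ge_zero order_trans)
    have q2: "\<bar>2 * ((P *v a) \<bullet> (h *v \<beta>)) - 2 * ((P *v a) \<bullet> (H *v \<beta>))\<bar> \<le> 2 * (B * (e * Rb))"
    proof -
      have "(P *v a) \<bullet> (h *v \<beta>) - (P *v a) \<bullet> (H *v \<beta>) = (P *v a) \<bullet> ((h - H) *v \<beta>)" by (simp add: mv_simps inner_diff_right)
      moreover have "\<bar>(P *v a) \<bullet> ((h - H) *v \<beta>)\<bar> \<le> B * (e * Rb)"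
        using Cauchy_Schwarz_ineq2[of "P *v a" "(h - H) *v \<beta>"] nPa ndb
        by (metis (no_types, lifting) mult_mono norm_ge_zero order_trans)
      ultimately show ?thesis by (simp add: abs_le_iff algebra_simps)
    qed
    have "\<bar>c2h - c2H\<bar> \<le> \<bar>(norm v1)\<^sup>2 - (norm u1)\<^sup>2\<bar> + \<bar>2 * ((P *v a) \<bullet> (h *v \<beta>)) - 2 * ((P *v a) \<bullet> (H *v \<beta>))\<bar>"
      unfolding c2h_def c2H_def by (rule order_trans[OF _ abs_triangle_ineq]) (simp add: algebra_simps)
    also have "\<dots> \<le> e * (2 * B * (Rb + 1)) + 2 * (B * (e * Rb))" using q1 q2 by linarith
    also have "\<dots> \<le> 4 * B * (Rb + 1) * e" using e0 B1 Rb0 by (simp add: algebra_simps)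
    finally show ?thesis .
  qed
  have GZb: "\<bar>c2H - sig\<^sup>2 * b2\<bar> \<le> 4 * B\<^sup>2 * (Rb + 1)\<^sup>2"
  proof -
    define Q where "Q = B\<^sup>2 * (Rb + 1)\<^sup>2"
    have nu1: "norm u1 \<le> B * (Rb + 1)" using norm_triangle_ineq[of "P *v \<beta>" "H *v a"] nPb nHa unfolding u1_def by (simp add: algebra_simps)
    have "(norm u1)\<^sup>2 \<le> (B * (Rb + 1))\<^sup>2" using nu1 by (intro power_mono) auto
    then have f1: "(norm u1)\<^sup>2 \<le> Q" unfolding Q_def by (simp add: power_mult_distrib)
    have f2a: "\<bar>(P *v a) \<bullet> (H *v \<beta>)\<bar> \<le> B * (B * Rb)"
      using Cauchy_Schwarz_ineq2[of "P *v a" "H *v \<beta>"] nPa nHb by (metis (no_types, lifting) mult_mono norm_ge_zero order_trans)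
    have "B * (B * Rb) \<le> Q" unfolding Q_def using B1 Rb0 by (simp add: power2_eq_square algebra_simps mult_left_mono)
    then have f2: "\<bar>(P *v a) \<bullet> (H *v \<beta>)\<bar> \<le> Q" using f2a by linarith
    have "sig\<^sup>2 * b2 \<le> B\<^sup>2 * Rb\<^sup>2" using sB s0 b2R b20 by (intro mult_mono power_mono) auto
    moreover have "B\<^sup>2 * Rb\<^sup>2 \<le> Q" unfolding Q_def using Rb0 by (intro mult_left_mono power_mono) auto
    ultimately have f3: "sig\<^sup>2 * b2 \<le> Q" by linarith
    have f4: "0 \<le> sig\<^sup>2 * b2" using b20 by simp
    have f5: "0 \<le> (norm u1)\<^sup>2" by simp
    have f0: "0 \<le> Q" unfolding Q_def by simp
    have g1: "c2H - sig\<^sup>2 * b2 \<le> 4 * Q" unfolding c2H_def using f0 f1 abs_le_D1[OF f2] f4 by linarith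
    have g2: "sig\<^sup>2 * b2 - c2H \<le> 4 * Q" unfolding c2H_def using f0 f5 abs_le_D2[OF f2] f3 by linarith
    have "\<bar>c2H - sig\<^sup>2 * b2\<bar> \<le> 4 * Q" using g1 g2 by (simp add: abs_le_iff)
    then show ?thesis unfolding Q_def by simp
  qed
  have T2: "\<bar>(c2h - sig\<^sup>2 * b2) / (sig * d) - (c2H - sig\<^sup>2 * b2) / sig\<bar> \<le> (4 * B * (Rb + 1) / sig + 4 * B\<^sup>2 * (Rb + 1)\<^sup>2 * Rb\<^sup>2 / sig) * (e + t)"
  proof -
    have eq: "(c2h - sig\<^sup>2 * b2) / (sig * d) - (c2H - sig\<^sup>2 * b2) / sig = ((c2h - c2H) - t\<^sup>2 * b2 * (c2H - sig\<^sup>2 * b2)) / (sig * d)"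
    proof -
      have sn: "sig \<noteq> 0" and dn: "d \<noteq> 0" using s0 d0 by auto
      have "(c2h - sig\<^sup>2 * b2) / (sig * d) - (c2H - sig\<^sup>2 * b2) / sig = ((c2h - sig\<^sup>2 * b2) - d * (c2H - sig\<^sup>2 * b2)) / (sig * d)"
        using sn dn by (simp add: field_simps)
      also have "(c2h - sig\<^sup>2 * b2) - d * (c2H - sig\<^sup>2 * b2) = (c2h - c2H) - (d - 1) * (c2H - sig\<^sup>2 * b2)"
        by (simp add: algebra_simps)
      also have "d - 1 = t\<^sup>2 * b2" unfolding d_def by simp
      finally show ?thesis .
    qed
    have "\<bar>(c2h - c2H) - t\<^sup>2 * b2 * (c2H - sig\<^sup>2 * b2)\<bar> \<le> \<bar>c2h - c2H\<bar> + t\<^sup>2 * b2 * \<bar>c2H - sig\<^sup>2 * b2\<bar>"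
    proof -
      have "\<bar>(c2h - c2H) - t\<^sup>2 * b2 * (c2H - sig\<^sup>2 * b2)\<bar> \<le> \<bar>c2h - c2H\<bar> + \<bar>t\<^sup>2 * b2 * (c2H - sig\<^sup>2 * b2)\<bar>"
        by (rule abs_triangle_ineq4)
      also have "\<bar>t\<^sup>2 * b2 * (c2H - sig\<^sup>2 * b2)\<bar> = t\<^sup>2 * b2 * \<bar>c2H - sig\<^sup>2 * b2\<bar>"
        using b20 by (simp add: abs_mult)
      finally show ?thesis .
    qed
    also have "\<dots> \<le> 4 * B * (Rb + 1) * e + t * Rb\<^sup>2 * (4 * B\<^sup>2 * (Rb + 1)\<^sup>2)"
    proof -
      have "t\<^sup>2 \<le> t" using t by (simp add: power2_eq_square mult_left_le_one_le)
      then have "t\<^sup>2 * b2 * \<bar>c2H - sig\<^sup>2 * b2\<bar> \<le> t * Rb\<^sup>2 * (4 * B\<^sup>2 * (Rb + 1)\<^sup>2)"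
        using b2R b20 GZb t by (intro mult_mono) auto
      then show ?thesis using c2diff by linarith
    qed
    finally have num: "\<bar>(c2h - c2H) - t\<^sup>2 * b2 * (c2H - sig\<^sup>2 * b2)\<bar> \<le> 4 * B * (Rb + 1) * e + t * Rb\<^sup>2 * (4 * B\<^sup>2 * (Rb + 1)\<^sup>2)" .
    have "\<bar>((c2h - c2H) - t\<^sup>2 * b2 * (c2H - sig\<^sup>2 * b2)) / (sig * d)\<bar> \<le> \<bar>(c2h - c2H) - t\<^sup>2 * b2 * (c2H - sig\<^sup>2 * b2)\<bar> / sig"
    proof -
      have "sig \<le> sig * d" using d1 s0 by simp
      then show ?thesis using s0 d0 by (simp add: abs_div abs_mult divide_left_mono mult_pos_pos)
    qed
    also have "\<dots> \<le> (4 * B * (Rb + 1) * e + t * Rb\<^sup>2 * (4 * B\<^sup>2 * (Rb + 1)\<^sup>2)) / sig"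
      using num s0 by (intro divide_right_mono) auto
    also have "\<dots> = (4 * B * (Rb + 1) / sig) * e + (4 * B\<^sup>2 * (Rb + 1)\<^sup>2 * Rb\<^sup>2 / sig) * t"
      using s0 by (simp add: field_simps)
    also have "\<dots> \<le> (4 * B * (Rb + 1) / sig + 4 * B\<^sup>2 * (Rb + 1)\<^sup>2 * Rb\<^sup>2 / sig) * (e + t)"
    proof -
      have c1: "0 \<le> 4 * B * (Rb + 1) / sig" using B1 Rb0 s0 by simp
      have c2: "0 \<le> 4 * B\<^sup>2 * (Rb + 1)\<^sup>2 * Rb\<^sup>2 / sig" using s0 by simp
      have "(4 * B * (Rb + 1) / sig) * e \<le> (4 * B * (Rb + 1) / sig) * (e + t)" using c1 t by (intro mult_left_mono) auto
      moreover have "(4 * B\<^sup>2 * (Rb + 1)\<^sup>2 * Rb\<^sup>2 / sig) * t \<le> (4 * B\<^sup>2 * (Rb + 1)\<^sup>2 * Rb\<^sup>2 / sig) * (e + t)" using c2 e0 by (intro mult_left_mono) auto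
      ultimately show ?thesis by (simp add: distrib_right)
    qed
    finally show ?thesis unfolding eq .
  qed
  have T3: "\<bar>t * (Rh - 2 * sig * b2 * w) / (sig * d)\<bar> \<le> ((10 * (B * (Rb + 1))\<^sup>2 + 2 * sig * Rb\<^sup>2 * B) / sig) * t"
  proof -
    have BR: "B \<le> B * (Rb + 1)" using B1 Rb0 by (simp add: algebra_simps)
    have nv1: "norm v1 \<le> B * (Rb + 1)" using norm_triangle_ineq[of "P *v \<beta>" "h *v a"] nPb nha unfolding v1_def by (simp add: algebra_simps)
    have Rhb: "\<bar>Rh\<bar> \<le> 10 * (B * (Rb + 1))\<^sup>2" unfolding Rh_def
    proof (rule rem4_bound)
      have BRb: "0 \<le> B * Rb" using B1 Rb0 by simp
      show "norm (P *v a) \<le> B * (Rb + 1)" using nPa BR by linarith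
      show "norm v1 \<le> B * (Rb + 1)" by (rule nv1)
      show "norm (h *v \<beta>) \<le> B * (Rb + 1)" using nhb B1 by (simp add: algebra_simps)
      show "norm (0::real^'m) \<le> B * (Rb + 1)" using BR B1 by simp
      show "\<bar>t\<bar> \<le> 1" using t by simp
    qed
    have wb: "\<bar>w\<bar> \<le> B" using Wabs[of h] hB unfolding w_def by linarith
    have "\<bar>2 * sig * b2 * w\<bar> \<le> 2 * sig * Rb\<^sup>2 * B" using s0 b20 b2R wb
      by (simp add: abs_mult) (intro mult_mono mult_nonneg_nonneg, auto)
    then have num: "\<bar>Rh - 2 * sig * b2 * w\<bar> \<le> 10 * (B * (Rb + 1))\<^sup>2 + 2 * sig * Rb\<^sup>2 * B"
      using Rhb abs_triangle_ineq4[of Rh "2 * sig * b2 * w"] by linarith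
    have "\<bar>t * (Rh - 2 * sig * b2 * w) / (sig * d)\<bar> \<le> t * \<bar>Rh - 2 * sig * b2 * w\<bar> / sig"
    proof -
      have "sig \<le> sig * d" using d1 s0 by simp
      then show ?thesis using s0 d0 t by (simp add: abs_div abs_mult divide_left_mono mult_pos_pos)
    qed
    also have "\<dots> \<le> t * (10 * (B * (Rb + 1))\<^sup>2 + 2 * sig * Rb\<^sup>2 * B) / sig"
      using num t s0 by (intro divide_right_mono mult_left_mono) auto
    also have "\<dots> = ((10 * (B * (Rb + 1))\<^sup>2 + 2 * sig * Rb\<^sup>2 * B) / sig) * t" by simp
    finally show ?thesis .
  qed
  have EUeq: "EU = 4 * Rb\<^sup>2 + (4 * B * (Rb + 1) / sig + 4 * B\<^sup>2 * (Rb + 1)\<^sup>2 * Rb\<^sup>2 / sig) + (10 * (B * (Rb + 1))\<^sup>2 + 2 * sig * Rb\<^sup>2 * B) / sig"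
    unfolding EU_def B_def by simp
  have fin: "GZ 0 a \<beta> / sig + 2 * k / t \<le> 2 * k / (t * d) + (c2h - sig\<^sup>2 * b2) / (sig * d) + t * (Rh - 2 * sig * b2 * w) / (sig * d) + EU * (e + t)"
  proof -
    define C2 where "C2 = 4 * B * (Rb + 1) / sig + 4 * B\<^sup>2 * (Rb + 1)\<^sup>2 * Rb\<^sup>2 / sig"
    define C3' where "C3' = (10 * (B * (Rb + 1))\<^sup>2 + 2 * sig * Rb\<^sup>2 * B) / sig"
    have C20: "0 \<le> C2" unfolding C2_def using B1 Rb0 s0 by simp
    have C30: "0 \<le> C3'" unfolding C3'_def using B1 Rb0 s0 by simp
    have a1: "4 * Rb\<^sup>2 * e \<le> 4 * Rb\<^sup>2 * (e + t)" using t by (intro mult_left_mono) auto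
    have a3: "C3' * t \<le> C3' * (e + t)" using C30 e0 by (intro mult_left_mono) auto
    have EUe: "EU * (e + t) = 4 * Rb\<^sup>2 * (e + t) + C2 * (e + t) + C3' * (e + t)"
      unfolding EUeq C2_def C3'_def by (simp add: algebra_simps)
    have g: "GZ 0 a \<beta> / sig = (c2H - sig\<^sup>2 * b2) / sig" using GZ0 by simp
    have a2: "C2 * (e + t) = C2 * (e + t)" ..
    show ?thesis
      using abs_le_D2[OF T1] abs_le_D2[OF T2[folded C2_def]] abs_le_D2[OF T3[folded C3'_def]] a1 a3 g EUe
      by linarith
  qed
  show ?thesis using fin main unfolding N_def d_def b2_def w_def k_def p_def e_def by simp
qed

end

locale mainL = pPH P H for P H :: "real^'n^'m" +
  fixes W D :: "real^'n^'m"
  assumes Wsub: "W \<in> subdiff spec_norm P"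
    and hyp: "has_dir_deriv (prox spec_norm) (P + W) (H + D) H"
begin

definition "Ev = H + D"
definition "G t = prox spec_norm (P + W + t *\<^sub>R Ev)"
definition "hh t = (G t - P) /\<^sub>R t"

lemma W_props: "W \<bullet> P = sig" "\<And>X. W \<bullet> X \<le> spec_norm X"
  using subdiff_props[OF Wsub] by (auto simp: sig_def)

lemma prox_Q: "prox spec_norm (P + W) = P"
  by (rule prox_eq) (simp add: Wsub)

lemma hh_tendsto: "(hh \<longlongrightarrow> H) (at_right 0)"
  using hyp unfolding has_dir_deriv_def prox_Q hh_def G_def Ev_def by simp

lemma G_eq: "t \<noteq> 0 \<Longrightarrow> G t = P + t *\<^sub>R hh t"
  unfolding hh_def by simp

lemma Wt_sub: "t \<noteq> 0 \<Longrightarrow> W + t *\<^sub>R (Ev - hh t) \<in> subdiff spec_norm (G t)"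
proof -
  assume t: "t \<noteq> 0"
  have "P + W + t *\<^sub>R Ev - G t \<in> subdiff spec_norm (G t)" unfolding G_def by (rule prox_subdiff)
  moreover have "P + W + t *\<^sub>R Ev - G t = W + t *\<^sub>R (Ev - hh t)"
    using G_eq[OF t] by (simp add: algebra_simps)
  ultimately show ?thesis by simp
qed

lemma sub_ineq: "X \<in> subdiff spec_norm Y \<Longrightarrow> spec_norm Z \<ge> spec_norm Y + X \<bullet> (Z - Y)"
  unfolding subdiff_def by auto

lemma squeeze:
  assumes t: "t > 0"
  shows "t * (W \<bullet> hh t) \<le> spec_norm (G t) - sig"
    "spec_norm (G t) - sig \<le> t * (W \<bullet> hh t) + t\<^sup>2 * ((Ev - hh t) \<bullet> hh t)"
proof -
  have tn: "t \<noteq> 0" using t by simp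
  have "spec_norm (G t) \<ge> spec_norm P + W \<bullet> (G t - P)" by (rule sub_ineq[OF Wsub])
  then show "t * (W \<bullet> hh t) \<le> spec_norm (G t) - sig" unfolding G_eq[OF tn] sig_def by simp
  have "spec_norm P \<ge> spec_norm (G t) + (W + t *\<^sub>R (Ev - hh t)) \<bullet> (P - G t)" by (rule sub_ineq[OF Wt_sub[OF tn]])
  then show "spec_norm (G t) - sig \<le> t * (W \<bullet> hh t) + t\<^sup>2 * ((Ev - hh t) \<bullet> hh t)"
    unfolding G_eq[OF tn] sig_def by (simp add: inner_add_left inner_diff_right power2_eq_square algebra_simps)
qed

lemma FG_tendsto: "((\<lambda>t. (spec_norm (G t) - sig) / t) \<longlongrightarrow> W \<bullet> H) (at_right 0)"
proof -
  have lim0: "((\<lambda>t. (spec_norm (G t) - sig) / t - W \<bullet> hh t) \<longlongrightarrow> 0) (at_right 0)"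
  proof (rule Lim_null_comparison)
    show "eventually (\<lambda>t. norm ((spec_norm (G t) - sig) / t - W \<bullet> hh t) \<le> t * \<bar>(Ev - hh t) \<bullet> hh t\<bar>) (at_right 0)"
      using eventually_at_right_less[of "0::real"]
    proof eventually_elim
      case (elim t)
      have a: "t * (W \<bullet> hh t) \<le> spec_norm (G t) - sig" and b: "spec_norm (G t) - sig \<le> t * (W \<bullet> hh t) + t\<^sup>2 * ((Ev - hh t) \<bullet> hh t)"
        using squeeze[OF elim] by auto
      have "(spec_norm (G t) - sig) / t - W \<bullet> hh t = (spec_norm (G t) - sig - t * (W \<bullet> hh t)) / t"
        using elim by (simp add: field_simps)
      moreover have "0 \<le> spec_norm (G t) - sig - t * (W \<bullet> hh t)" using a by simp
      moreover have "spec_norm (G t) - sig - t * (W \<bullet> hh t) \<le> t * (t * \<bar>(Ev - hh t) \<bullet> hh t\<bar>)"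
      proof -
        have "t\<^sup>2 * ((Ev - hh t) \<bullet> hh t) \<le> t\<^sup>2 * \<bar>(Ev - hh t) \<bullet> hh t\<bar>" by (intro mult_left_mono) auto
        then show ?thesis using b by (simp add: power2_eq_square mult.assoc)
      qed
      ultimately show ?case using elim by (simp add: divide_le_eq mult.commute)
    qed
    show "((\<lambda>t. t * \<bar>(Ev - hh t) \<bullet> hh t\<bar>) \<longlongrightarrow> 0) (at_right 0)"
    proof -
      have "((\<lambda>t. t * \<bar>(Ev - hh t) \<bullet> hh t\<bar>) \<longlongrightarrow> 0 * \<bar>(Ev - H) \<bullet> H\<bar>) (at_right 0)"
        by (intro tendsto_intros hh_tendsto)
      then show ?thesis by simp
    qed
  qed
  have "((\<lambda>t. ((spec_norm (G t) - sig) / t - W \<bullet> hh t) + W \<bullet> hh t) \<longlongrightarrow> 0 + W \<bullet> H) (at_right 0)"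
    by (intro tendsto_intros lim0 hh_tendsto)
  then show ?thesis by simp
qed

lemma first_W_tendsto: "((\<lambda>t. (spec_norm (P + t *\<^sub>R H) - spec_norm P) / t) \<longlongrightarrow> W \<bullet> H) (at_right 0)"
proof -
  have lim0: "((\<lambda>t. (spec_norm (P + t *\<^sub>R H) - spec_norm P) / t - (spec_norm (G t) - sig) / t) \<longlongrightarrow> 0) (at_right 0)"
  proof (rule Lim_null_comparison)
    show "eventually (\<lambda>t. norm ((spec_norm (P + t *\<^sub>R H) - spec_norm P) / t - (spec_norm (G t) - sig) / t) \<le> spec_norm (H - hh t)) (at_right 0)"
      using eventually_at_right_less[of "0::real"]
    proof eventually_elim
      case (elim t)
      have tn: "t \<noteq> 0" using elim by simp
      have "(spec_norm (P + t *\<^sub>R H) - spec_norm P) / t - (spec_norm (G t) - sig) / t = (spec_norm (P + t *\<^sub>R H) - spec_norm (G t)) / t"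
        unfolding sig_def using tn by (simp add: field_simps)
      moreover have "\<bar>spec_norm (P + t *\<^sub>R H) - spec_norm (G t)\<bar> \<le> spec_norm (P + t *\<^sub>R H - G t)" by (rule sn_diff_le)
      moreover have "P + t *\<^sub>R H - G t = t *\<^sub>R (H - hh t)" unfolding G_eq[OF tn] by (simp add: algebra_simps)
      moreover have "spec_norm (t *\<^sub>R (H - hh t)) = t * spec_norm (H - hh t)" using elim by (simp add: sn_scale)
      ultimately show ?case using elim by (simp add: abs_div divide_le_eq mult.commute)
    qed
    have "((\<lambda>t. spec_norm (H - hh t)) \<longlongrightarrow> spec_norm (H - H)) (at_right 0)"
      by (intro sn_tendsto tendsto_intros hh_tendsto)
    then show "((\<lambda>t. spec_norm (H - hh t)) \<longlongrightarrow> 0) (at_right 0)" by (simp add: sn_zero)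
  qed
  have "((\<lambda>t. ((spec_norm (P + t *\<^sub>R H) - spec_norm P) / t - (spec_norm (G t) - sig) / t) + (spec_norm (G t) - sig) / t) \<longlongrightarrow> 0 + W \<bullet> H) (at_right 0)"
    by (intro tendsto_intros lim0 FG_tendsto)
  then show ?thesis by simp
qed

lemma WH: "W \<bullet> H = mu1 / (2 * sig)"
  using tendsto_unique[OF trivial_limit_at_right_real first_W_tendsto first_tendsto] .

lemma dir_deriv_W: "dir_deriv spec_norm P H = W \<bullet> H"
  using dir_deriv_eq WH by simp

lemma crit: "H \<in> crit_cone spec_norm P W"
  unfolding crit_cone_def using dir_deriv_W by (simp add: inner_commute)

end

context mainL
begin

definition "phi Z = second_dir_deriv spec_norm P H Z - W \<bullet> Z"
definition "Aq s Z = (spec_norm (P + s *\<^sub>R H + (s\<^sup>2 / 2) *\<^sub>R Z) - spec_norm P - s * (W \<bullet> H)) / (s\<^sup>2 / 2) - W \<bullet> Z"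
definition "Bq t = 2 * (spec_norm (G t) - sig - t * (W \<bullet> hh t)) / t\<^sup>2"
definition "Zt t = (2 / t) *\<^sub>R (hh t - H)"
definition "err t = ((spec_norm (G t) - sig)\<^sup>2 / (sig * t\<^sup>2) - mu1\<^sup>2 / (4 * sig^3)) + EU * (spec_norm (hh t - H) + t)"

lemma A_tendsto: "((\<lambda>s. Aq s Z) \<longlongrightarrow> phi Z) (at_right 0)"
  unfolding Aq_def phi_def
  by (intro tendsto_intros) (use second_tendsto'[of Z] dir_deriv_W in simp)

lemma WX: "W \<bullet> (P + s *\<^sub>R H + (s\<^sup>2 / 2) *\<^sub>R Z) = sig + s * (W \<bullet> H) + (s\<^sup>2 / 2) * (W \<bullet> Z)"
  using W_props(1) by (simp add: inner_add_right)

lemma A_eq: "s \<noteq> 0 \<Longrightarrow> (s\<^sup>2 / 2) * Aq s Z = spec_norm (P + s *\<^sub>R H + (s\<^sup>2 / 2) *\<^sub>R Z) - W \<bullet> (P + s *\<^sub>R H + (s\<^sup>2 / 2) *\<^sub>R Z)"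
  unfolding Aq_def WX sig_def by (simp add: field_simps)

lemma A_nonneg: "s > 0 \<Longrightarrow> Aq s Z \<ge> 0"
proof -
  assume s: "s > 0"
  have "(s\<^sup>2 / 2) * Aq s Z \<ge> 0" using A_eq[of s Z] s W_props(2) by simp
  then show ?thesis using s by (simp add: zero_le_mult_iff)
qed

lemma phi_nonneg: "phi Z \<ge> 0"
  by (rule tendsto_lowerbound[OF A_tendsto _ trivial_limit_at_right_real])
     (use eventually_at_right_less[of "0::real"] A_nonneg in \<open>auto elim: eventually_mono\<close>)

definition "phis = Inf (range phi)"

lemma phi_bdd: "bdd_below (range phi)"
  using phi_nonneg by (auto simp: bdd_below_def)

lemma phis_le: "phis \<le> phi Z"
  unfolding phis_def by (rule cInf_lower) (auto simp: phi_bdd)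

lemma phis_nonneg: "phis \<ge> 0"
  unfolding phis_def by (rule cInf_greatest) (auto simp: phi_nonneg)

lemma phi_formula: "phi Z = nu Z / sig - mu1\<^sup>2 / (4 * sig^3) - W \<bullet> Z"
  unfolding phi_def second_eq ..

lemma alg3: "(s::real) \<noteq> 0 \<Longrightarrow> t \<noteq> 0 \<Longrightarrow> p0 = s * w0 \<Longrightarrow> (g + (2 / t) * (p1 - p0)) / s - (2 / t) * (w1 - w0) = g / s + 2 * (p1 / s - w1) / t"
  by (simp add: field_simps)

lemma GZ_Z: "GZ Z a \<beta> = GZ 0 a \<beta> + (P *v a) \<bullet> (Z *v a)"
  unfolding GZ_def by (simp add: matrix_vector_mult_0)

lemma F2_global:
  assumes t: "0 < t" "t \<le> 1" and hb: "spec_norm (hh t - H) \<le> 1"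
  shows "phi (Zt t) \<le> Bq t + err t"
proof -
  have s0: "sig > 0" by (rule sig_pos)
  have tn: "t \<noteq> 0" using t by simp
  define T where "T = (spec_norm (G t) - sig)\<^sup>2 / (sig * t\<^sup>2)"
  define e where "e = spec_norm (hh t - H)"
  define c where "c = sig * (Bq t + T + EU * (e + t) + W \<bullet> Zt t)"
  have pt: "GZ (Zt t) a \<beta> \<le> c" if a: "a \<in> A1" and b: "\<beta> \<in> Perp" and nb: "norm \<beta> \<le> Rb" for a \<beta>
  proof -
    have aE: "a \<in> E0" and an: "norm a = 1" and am: "2 * ((P *v a) \<bullet> (H *v a)) = mu1" using A1_props[OF a] by auto
    define x where "x = a + t *\<^sub>R \<beta>"
    have nx: "(norm x)\<^sup>2 = 1 + t\<^sup>2 * (norm \<beta>)\<^sup>2"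
      using EP_orth(1)[OF aE b] an unfolding x_def by (simp add: norm_add_scale_sq)
    have xnz: "x \<noteq> 0"
    proof
      assume "x = 0" then have "(norm x)\<^sup>2 = 0" by simp
      moreover have "0 \<le> t\<^sup>2 * (norm \<beta>)\<^sup>2" by simp
      ultimately show False using nx by linarith
    qed
    have ph: "(spec_norm (G t))\<^sup>2 \<ge> (norm ((P + t *\<^sub>R hh t) *v x))\<^sup>2 / (1 + t\<^sup>2 * (norm \<beta>)\<^sup>2)"
      using theta_sq_ge[OF xnz, of "G t"] nx G_eq[OF tn] by simp
    have fp: "GZ 0 a \<beta> / sig + 2 * ((P *v a) \<bullet> (hh t *v a) / sig - W \<bullet> hh t) / t
      \<le> (((norm ((P + t *\<^sub>R hh t) *v x))\<^sup>2 / (1 + t\<^sup>2 * (norm \<beta>)\<^sup>2) - sig\<^sup>2) / sig - 2 * t * (W \<bullet> hh t)) / t\<^sup>2 + EU * (e + t)"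
      unfolding x_def e_def by (rule F2_point[OF W_props(2) WH t hb a b nb])
    have a2: "2 * (spec_norm (G t) - sig - t * (W \<bullet> hh t)) / t\<^sup>2 \<ge>
        (((norm ((P + t *\<^sub>R hh t) *v x))\<^sup>2 / (1 + t\<^sup>2 * (norm \<beta>)\<^sup>2) - sig\<^sup>2) / sig - 2 * t * (W \<bullet> hh t)) / t\<^sup>2 - (spec_norm (G t) - sig)\<^sup>2 / (sig * t\<^sup>2)"
      by (rule alg2[OF s0 t(1) ph])
    have lhs: "GZ 0 a \<beta> / sig + 2 * ((P *v a) \<bullet> (hh t *v a) / sig - W \<bullet> hh t) / t \<le> Bq t + T + EU * (e + t)"
      using fp a2 unfolding Bq_def T_def by linarith
    have ident: "GZ (Zt t) a \<beta> / sig - W \<bullet> Zt t = GZ 0 a \<beta> / sig + 2 * ((P *v a) \<bullet> (hh t *v a) / sig - W \<bullet> hh t) / t"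
    proof -
      have pa: "(P *v a) \<bullet> (H *v a) = sig * (W \<bullet> H)" using am WH s0 by (simp add: field_simps)
      have z1: "(P *v a) \<bullet> (Zt t *v a) = (2 / t) * ((P *v a) \<bullet> (hh t *v a) - (P *v a) \<bullet> (H *v a))"
        unfolding Zt_def by (simp only: mv_scaleR matrix_vector_mult_diff_rdistrib inner_diff_right inner_scaleR_right)
      have z2: "W \<bullet> Zt t = (2 / t) * (W \<bullet> hh t - W \<bullet> H)"
        unfolding Zt_def by (simp only: inner_diff_right inner_scaleR_right)
      show ?thesis unfolding GZ_Z[of "Zt t" a \<beta>] z1 z2
        using s0 tn pa by (intro alg3) auto
    qed
    have "GZ (Zt t) a \<beta> / sig \<le> Bq t + T + EU * (e + t) + W \<bullet> Zt t" using ident lhs by linarith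
    then show ?thesis unfolding c_def using s0 by (simp add: divide_le_eq mult.commute)
  qed
  have "nu (Zt t) \<le> c" by (rule nu_le) (use pt in auto)
  then have "nu (Zt t) / sig \<le> Bq t + T + EU * (e + t) + W \<bullet> Zt t" unfolding c_def using s0 by (simp add: divide_le_eq mult.commute)
  then show ?thesis unfolding phi_formula err_def T_def[symmetric] e_def[symmetric] by linarith
qed

lemma err_tendsto: "(err \<longlongrightarrow> 0) (at_right 0)"
proof -
  have s0: "sig > 0" by (rule sig_pos)
  have eq: "(spec_norm (G t) - sig)\<^sup>2 / (sig * t\<^sup>2) = ((spec_norm (G t) - sig) / t)\<^sup>2 / sig" for t
    by (simp add: power_divide field_simps)
  have "((\<lambda>t. ((spec_norm (G t) - sig) / t)\<^sup>2 / sig - mu1\<^sup>2 / (4 * sig^3) + EU * (spec_norm (hh t - H) + t))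
      \<longlongrightarrow> (W \<bullet> H)\<^sup>2 / sig - mu1\<^sup>2 / (4 * sig^3) + EU * (spec_norm (H - H) + 0)) (at_right 0)"
    using s0 by (intro tendsto_intros FG_tendsto sn_tendsto hh_tendsto) auto
  moreover have "(W \<bullet> H)\<^sup>2 / sig - mu1\<^sup>2 / (4 * sig^3) + EU * (spec_norm (H - H) + 0) = 0"
    unfolding WH using s0 by (simp add: sn_zero power_divide field_simps power2_eq_square power3_eq_cube)
  ultimately show ?thesis unfolding err_def eq by simp
qed

lemma KI_t:
  assumes t: "t > 0" and l: "l > 0"
  shows "l\<^sup>2 * Aq (l * t) Z \<ge> Bq t + 2 * ((Ev - hh t) \<bullet> (l *\<^sub>R H - hh t + (l\<^sup>2 * t / 2) *\<^sub>R Z))"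
proof -
  have tn: "t \<noteq> 0" using t by simp
  have ltn: "l * t \<noteq> 0" using t l by simp
  define X where "X = P + (l * t) *\<^sub>R H + ((l * t)\<^sup>2 / 2) *\<^sub>R Z"
  define V where "V = l *\<^sub>R H - hh t + (l\<^sup>2 * t / 2) *\<^sub>R Z"
  have XG: "X - G t = t *\<^sub>R V" unfolding X_def V_def G_eq[OF tn]
    by (simp add: algebra_simps power2_eq_square scaleR_add_right scaleR_diff_right)
  have sub: "spec_norm X \<ge> spec_norm (G t) + (W + t *\<^sub>R (Ev - hh t)) \<bullet> (X - G t)"
    by (rule sub_ineq[OF Wt_sub[OF tn]])
  have i1: "spec_norm X - W \<bullet> X \<ge> (spec_norm (G t) - W \<bullet> G t) + t\<^sup>2 * ((Ev - hh t) \<bullet> V)"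
  proof -
    have e1: "(W + t *\<^sub>R (Ev - hh t)) \<bullet> (X - G t) = t * (W \<bullet> V) + t\<^sup>2 * ((Ev - hh t) \<bullet> V)"
      unfolding XG by (simp add: inner_add_left power2_eq_square algebra_simps)
    have e2: "W \<bullet> X - W \<bullet> G t = t * (W \<bullet> V)" by (metis XG inner_diff_right inner_scaleR_right)
    show ?thesis using sub e1 e2 by linarith
  qed
  have i2: "spec_norm X - W \<bullet> X = ((l * t)\<^sup>2 / 2) * Aq (l * t) Z"
    unfolding X_def using A_eq[OF ltn, of Z] by simp
  have i3: "spec_norm (G t) - W \<bullet> G t = (t\<^sup>2 / 2) * Bq t"
    unfolding Bq_def G_eq[OF tn] using W_props(1) tn by (simp add: inner_add_right field_simps)
  have "(t\<^sup>2 / 2) * (l\<^sup>2 * Aq (l * t) Z) \<ge> (t\<^sup>2 / 2) * (Bq t + 2 * ((Ev - hh t) \<bullet> V))"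
  proof -
    have "(t\<^sup>2 / 2) * (l\<^sup>2 * Aq (l * t) Z) = ((l * t)\<^sup>2 / 2) * Aq (l * t) Z" by (simp add: power_mult_distrib)
    moreover have "(t\<^sup>2 / 2) * (Bq t + 2 * ((Ev - hh t) \<bullet> V)) = (t\<^sup>2 / 2) * Bq t + t\<^sup>2 * ((Ev - hh t) \<bullet> V)"
      by (simp add: algebra_simps)
    ultimately show ?thesis using i1 i2 i3 by linarith
  qed
  moreover have "t\<^sup>2 / 2 > 0" using tn by simp
  ultimately show ?thesis unfolding V_def by (simp add: mult_le_cancel_left_pos)
qed

lemma lin_filterlim: "l > 0 \<Longrightarrow> filterlim (\<lambda>t. l * t) (at_right 0) (at_right (0::real))"
proof (rule filterlim_at_withinI)
  assume l: "l > 0"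
  have "((\<lambda>t. l * t) \<longlongrightarrow> l * 0) (at_right (0::real))" by (intro tendsto_intros)
  then show "((\<lambda>t. l * t) \<longlongrightarrow> 0) (at_right (0::real))" by simp
  show "eventually (\<lambda>t. l * t \<in> {0<..} - {0}) (at_right (0::real))"
    using eventually_at_right_less[of "0::real"] by eventually_elim (use l in simp)
qed

lemma KI:
  assumes l: "l > 0"
  shows "l\<^sup>2 * phi Z \<ge> phis + 2 * (l - 1) * (D \<bullet> H)"
proof -
  define f where "f t = l\<^sup>2 * Aq (l * t) Z - 2 * ((Ev - hh t) \<bullet> (l *\<^sub>R H - hh t + (l\<^sup>2 * t / 2) *\<^sub>R Z)) + err t" for t
  have Alim: "((\<lambda>t. Aq (l * t) Z) \<longlongrightarrow> phi Z) (at_right 0)"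
    by (rule filterlim_compose[OF A_tendsto lin_filterlim[OF l]])
  have flim: "(f \<longlongrightarrow> l\<^sup>2 * phi Z - 2 * ((Ev - H) \<bullet> (l *\<^sub>R H - H + (l\<^sup>2 * 0 / 2) *\<^sub>R Z)) + 0) (at_right 0)"
    unfolding f_def by (intro tendsto_intros Alim hh_tendsto err_tendsto) auto
  have ev1: "eventually (\<lambda>t. t < 1) (at_right (0::real))"
    using eventually_at_right_field[of "\<lambda>t. t < 1" "0::real"] by (auto intro: exI[of _ 1])
  have ev2: "eventually (\<lambda>t. t > 0) (at_right (0::real))" by (simp add: eventually_at_right_less)
  have "((\<lambda>t. spec_norm (hh t - H)) \<longlongrightarrow> spec_norm (H - H)) (at_right 0)"
    by (intro sn_tendsto tendsto_intros hh_tendsto)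
  then have ev3: "eventually (\<lambda>t. spec_norm (hh t - H) < 1) (at_right 0)"
    by (rule order_tendstoD(2)) (simp add: sn_zero)
  have "eventually (\<lambda>t. phis \<le> f t) (at_right 0)"
    using ev1 ev2 ev3
  proof eventually_elim
    case (elim t)
    have "phi (Zt t) \<le> Bq t + err t" using F2_global[of t] elim by auto
    moreover have "phis \<le> phi (Zt t)" by (rule phis_le)
    moreover have "l\<^sup>2 * Aq (l * t) Z \<ge> Bq t + 2 * ((Ev - hh t) \<bullet> (l *\<^sub>R H - hh t + (l\<^sup>2 * t / 2) *\<^sub>R Z))"
      using KI_t[OF _ l] elim by auto
    ultimately show ?case unfolding f_def by linarith
  qed
  then have "phis \<le> l\<^sup>2 * phi Z - 2 * ((Ev - H) \<bullet> (l *\<^sub>R H - H + (l\<^sup>2 * 0 / 2) *\<^sub>R Z)) + 0"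
    by (intro tendsto_lowerbound[OF flim] trivial_limit_at_right_real)
  moreover have "(Ev - H) \<bullet> (l *\<^sub>R H - H + (l\<^sup>2 * 0 / 2) *\<^sub>R Z) = (l - 1) * (D \<bullet> H)"
    unfolding Ev_def by (simp add: inner_diff_right algebra_simps)
  ultimately have "phis \<le> l\<^sup>2 * phi Z - 2 * ((l - 1) * (D \<bullet> H))" by simp
  moreover have "2 * ((l - 1) * (D \<bullet> H)) = 2 * (l - 1) * (D \<bullet> H)" by simp
  ultimately show ?thesis by linarith
qed

lemma phis_eq: "phis = D \<bullet> H"
proof -
  define p where "p = phis"
  define q where "q = D \<bullet> H"
  have p0: "p \<ge> 0" unfolding p_def by (rule phis_nonneg)
  have key: "l\<^sup>2 * p \<ge> p + 2 * (l - 1) * q" if l: "l > 0" for l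
  proof -
    have "phis \<ge> (phis + 2 * (l - 1) * (D \<bullet> H)) / l\<^sup>2"
      unfolding phis_def[of] 
    proof (rule cInf_greatest)
      show "range phi \<noteq> {}" by simp
      fix y assume "y \<in> range phi"
      then obtain Z where y: "y = phi Z" by auto
      show "(Inf (range phi) + 2 * (l - 1) * (D \<bullet> H)) / l\<^sup>2 \<le> y"
        using KI[OF l, of Z] l unfolding y phis_def by (simp add: divide_le_eq mult.commute)
    qed
    then show ?thesis using l unfolding p_def q_def by (simp add: divide_le_eq mult.commute)
  qed
  have up: "(2 + s) * p \<ge> 2 * q" if s: "0 < s" "s < 1" for s
  proof -
    have "(1 + s)\<^sup>2 * p \<ge> p + 2 * (1 + s - 1) * q" using key[of "1 + s"] s by simp
    then have "s * ((2 + s) * p) \<ge> s * (2 * q)" by (simp add: algebra_simps power2_eq_square)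
    then show ?thesis using s by simp
  qed
  have dn: "(2 - s) * p \<le> 2 * q" if s: "0 < s" "s < 1" for s
  proof -
    have "(1 - s)\<^sup>2 * p \<ge> p + 2 * (1 - s - 1) * q" using key[of "1 - s"] s by simp
    then have "s * ((2 - s) * p) \<le> s * (2 * q)" by (simp add: algebra_simps power2_eq_square)
    then show ?thesis using s by simp
  qed
  have "q \<le> p"
  proof (rule field_le_epsilon)
    fix e :: real assume e: "e > 0"
    define s where "s = min (1/2) (e / (p + 1))"
    have s0: "0 < s" "s < 1" using e p0 by (auto simp: s_def)
    have "s * p \<le> e / (p + 1) * p" using p0 by (intro mult_right_mono) (auto simp: s_def)
    also have "\<dots> \<le> e" using e p0 by (simp add: field_simps)
    finally have sp: "s * p \<le> e" .
    have "(2 + s) * p \<ge> 2 * q" by (rule up[OF s0])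
    moreover have "(2 + s) * p = 2 * p + s * p" by (simp add: algebra_simps)
    ultimately show "q \<le> p + e" using sp e by linarith
  qed
  moreover have "p \<le> q"
  proof (rule field_le_epsilon)
    fix e :: real assume e: "e > 0"
    define s where "s = min (1/2) (e / (p + 1))"
    have s0: "0 < s" "s < 1" using e p0 by (auto simp: s_def)
    have "s * p \<le> e / (p + 1) * p" using p0 by (intro mult_right_mono) (auto simp: s_def)
    also have "\<dots> \<le> e" using e p0 by (simp add: field_simps)
    finally have sp: "s * p \<le> e" .
    have "(2 - s) * p \<le> 2 * q" by (rule dn[OF s0])
    moreover have "(2 - s) * p = 2 * p - s * p" by (simp add: algebra_simps)
    ultimately show "p \<le> q + e" using sp e by linarith
  qed
  ultimately show ?thesis unfolding p_def q_def by simp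
qed

lemma psi_eq: "psi_star spec_norm P H W = ereal (- phis)"
  unfolding psi_star_def
proof (rule SUP_eqI)
  fix Z :: "real^'n^'m" assume "Z \<in> UNIV"
  have "W \<bullet> Z - second_dir_deriv spec_norm P H Z = - phi Z" unfolding phi_def by simp
  then show "ereal (W \<bullet> Z - second_dir_deriv spec_norm P H Z) \<le> ereal (- phis)"
    using phis_le[of Z] by simp
next
  fix y :: ereal
  assume y: "\<And>Z. Z \<in> UNIV \<Longrightarrow> ereal (W \<bullet> Z - second_dir_deriv spec_norm P H Z) \<le> y"
  show "ereal (- phis) \<le> y"
  proof (cases y)
    case (real r)
    have "- r \<le> phi Z" for Z
    proof -
      have "ereal (W \<bullet> Z - second_dir_deriv spec_norm P H Z) \<le> ereal r" using y[of Z] real by simp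
      then show ?thesis unfolding phi_def by simp
    qed
    then have "- r \<le> phis" unfolding phis_def by (intro cInf_greatest) auto
    then show ?thesis using real by simp
  next
    case PInf then show ?thesis by simp
  next
    case MInf
    then have "ereal (W \<bullet> 0 - second_dir_deriv spec_norm P H 0) \<le> - \<infinity>" using y[of 0] by simp
    then show ?thesis by simp
  qed
qed

lemma main_result: "H \<in> crit_cone spec_norm P W \<and> ereal (H \<bullet> D) = - psi_star spec_norm P H W"
  using crit psi_eq phis_eq by (simp add: inner_commute)

end

theorem proposition3p3:
  fixes P W D H :: "real^'n^'m"
  assumes "CARD('m) \<le> CARD('n)"
    and "P \<noteq> 0"
    and "W \<in> subdiff spec_norm P"
    and "has_dir_deriv (prox spec_norm) (P + W) (H + D) H"
  shows "H \<in> crit_cone spec_norm P W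
         \<and> ereal (H \<bullet> D) = - psi_star spec_norm P H W"
proof -
  interpret mainL P H W D
    by unfold_locales (use assms in auto)
  show ?thesis by (rule main_result)
qed

end
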